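(* Suppose Assumptions (A1)–(A3) hold and let $\{\boldsymbol x_k\},\{\boldsymbol v_k\}$ be generated by Algorithm 1 with parameters $\alpha>\beta>0$ and $\eta>0$. Define $\epsilon_1=(\alpha-\beta)\rho_2(L)-\frac12(2+3L_f^2)$, $\epsilon_2=\beta^2\rho(L)+(2\alpha^2+\beta^2)\rho^2(L)+\frac52L_f^2$, $\epsilon_3=\beta-\frac12-\frac\alpha{2\beta^2}-\frac1{2\beta\rho_2(L)}$, $\epsilon_4=2\beta^2+\frac12$, $\epsilon_5=\frac14-\frac1{2\beta}(\frac1\beta+\frac1{\rho_2(L)}+\frac\alpha\beta)L_f^2$, $\epsilon_6=\frac1{\beta^2}(1+\frac1{\rho_2(L)}+\frac\alpha\beta)L_f^2+\frac{L_f(1+L_f)}2$, and $$V_k=\frac12\|\boldsymbol x_k\|^2_{\boldsymbol K}+\frac12\Big\|\boldsymbol v_k+\frac1\beta\boldsymbol g^0_k\Big\|^2_{\boldsymbol Q+\frac\alpha\beta\boldsymbol K}+\boldsymbol x_k^\top\boldsymbol K\Big(\boldsymbol v_k+\frac1\beta\boldsymbol g^0_k\Big)+n(f(\bar x_k)-f^* ).$$ Then for all $k\in\mathbb N_0$, $$V_{k+1}\le V_k-\eta(\epsilon_1-\eta\epsilon_2)\|\boldsymbol x_k\|^2_{\boldsymbol K}-\eta(\epsilon_3-\eta\epsilon_4)\Big\|\boldsymbol v_k+\frac1\beta\boldsymbol g_k^0\Big\|^2_{\boldsymbol K}-\eta(\epsilon_5-\eta\epsilon_6)\|\bar{\boldsymbol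 g}_k\|^2-\frac\eta4\|\bar{\boldsymbol g}^0_k\|^2.$$
   Context: Setting: $n$ agents on weighted undirected graph $\mathcal G$ with Laplacian $L=(L_{ij})$; $\rho(L)$ largest and $\rho_2(L)$ smallest positive eigenvalue of $L$. $f=\frac1n\sum_if_i$, $f_i:\mathbb R^p\to\mathbb R$, $f^*=\min f$. Assumptions: (A1) $\mathcal G$ connected; (A2) $\arg\min f\ne\emptyset$, $f^*>-\infty$; (A3) each $\nabla f_i$ is $L_f$-Lipschitz. Algorithm 1: $x_{i,0}$ arbitrary, $\sum_jv_{j,0}=\mathbf 0_p$, $x_{i,k+1}=x_{i,k}-\eta(\alpha\sum_jL_{ij}x_{j,k}+\beta v_{i,k}+\nabla f_i(x_{i,k}))$, $v_{i,k+1}=v_{i,k}+\eta\beta\sum_jL_{ij}x_{j,k}$. Notation: $\boldsymbol x_k=\mathrm{col}(x_{i,k})$, $\boldsymbol v_k=\mathrm{col}(v_{i,k})$, $\bar x_k=\frac1n\sum_ix_{i,k}$, $\boldsymbol K=(I_n-\frac1n\mathbf 1\mathbf 1^\top)\otimes I_p$, $\boldsymbol H=\frac1n\mathbf 1\mathbf 1^\top\otimes I_p$, $\|z\|^2_M=z^\top Mz$, $\boldsymbol g_k=\mathrm{col}(\nabla f_i(x_{i,k}))$, $\bar{\boldsymbol g}_k=\boldsymbol H\boldsymbol g_k$, $\boldsymbol g_k^0=\mathrm{col}(\nabla f_i(\bar x_k))$, $\bar{\boldsymbol g}^0_k=\boldsymbol H\boldsymbol g^0_k$. $\boldsymbol Q=R\Lambda_1^{-1}R^\top\otimes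 I_p$, where $[\frac1{\sqrt n}\mathbf 1_n\ R]$ is an orthogonal matrix whose columns of $R$ are orthonormal eigenvectors of $L$ for its nonzero eigenvalues $0<\lambda_2\le\dots\le\lambda_n$ and $\Lambda_1=\mathrm{diag}(\lambda_2,\dots,\lambda_n)$ (so $R\Lambda_1^{-1}R^\top$ is the Moore–Penrose pseudoinverse of $L$). *)

theory Defs
  imports "HOL-Analysis.Analysis"
begin

text \<open>Agents are indexed by a finite type 'n (n = CARD('n)), decision variables live in
  real^'p.  A stacked vector col(z_i) in R^(np) is represented as z :: (real^'p)^'n
  with block z$i.  For an n x n matrix M, the Kronecker product M (x) I_p acts blockwise.\<close>

definition weighted_graph :: "real^'n^'n \<Rightarrow> bool" where
  "weighted_graph W \<longleftrightarrow> (\<forall>i j. W$i$j = W$j$i) \<and> (\<forall>i j. 0 \<le> W$i$j) \<and> (\<forall>i. W$i$i = 0)"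

definition graph_connected :: "real^'n^'n \<Rightarrow> bool" where
  "graph_connected W \<longleftrightarrow> (\<forall>i j. (i, j) \<in> {(a, b). 0 < W$a$b}\<^sup>*)"

definition lap :: "real^'n^'n \<Rightarrow> real^'n^'n" where
  "lap W = (\<chi> i j. if i = j then (\<Sum>k\<in>UNIV - {i}. W$i$k) else - W$i$j)"

definition is_eigenvalue :: "real^'n^'n \<Rightarrow> real \<Rightarrow> bool" where
  "is_eigenvalue A c \<longleftrightarrow> (\<exists>v. v \<noteq> 0 \<and> A *v v = c *\<^sub>R v)"

definition rho :: "real^'n^'n \<Rightarrow> real" where
  "rho A = Max {c. is_eigenvalue A c}"

definition rho2 :: "real^'n^'n \<Rightarrow> real" where
  "rho2 A = Min {c. 0 < c \<and> is_eigenvalue A c}"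

definition pinv :: "real^'n^'n \<Rightarrow> real^'n^'n" where
  "pinv A = (THE M. A ** M ** A = A \<and> M ** A ** M = M \<and>
                    transpose (A ** M) = A ** M \<and> transpose (M ** A) = M ** A)"

definition ones_mat :: "real^'n^'n" where
  "ones_mat = (\<chi> i j. 1)"

definition Kmat :: "real^'n^'n" where
  "Kmat = mat 1 - (1 / real CARD('n)) *\<^sub>R ones_mat"

definition Hmat :: "real^'n^'n" where
  "Hmat = (1 / real CARD('n)) *\<^sub>R ones_mat"

definition kmult :: "real^'n^'n \<Rightarrow> (real^'p)^'n \<Rightarrow> (real^'p)^'n" where
  "kmult M z = (\<chi> i. \<Sum>j\<in>UNIV. M$i$j *\<^sub>R z$j)"

definition kinner :: "(real^'p)^'n \<Rightarrow> real^'n^'n \<Rightarrow> (real^'p)^'n \<Rightarrow> real" where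
  "kinner y M z = y \<bullet> kmult M z"

definition wnorm2 :: "real^'n^'n \<Rightarrow> (real^'p)^'n \<Rightarrow> real" where
  "wnorm2 M z = kinner z M z"

definition avgf :: "('n \<Rightarrow> real^'p \<Rightarrow> real) \<Rightarrow> real^'p \<Rightarrow> real" where
  "avgf f y = (1 / real CARD('n)) * (\<Sum>i\<in>UNIV. f i y)"

definition fstar :: "('n \<Rightarrow> real^'p \<Rightarrow> real) \<Rightarrow> real" where
  "fstar f = (INF y. avgf f y)"

definition xbar :: "(real^'p)^'n \<Rightarrow> real^'p" where
  "xbar z = (1 / real CARD('n)) *\<^sub>R (\<Sum>i\<in>UNIV. z$i)"

definition gcol :: "('n \<Rightarrow> real^'p \<Rightarrow> real^'p) \<Rightarrow> (real^'p)^'n \<Rightarrow> (real^'p)^'n" where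
  "gcol grad z = (\<chi> i. grad i (z$i))"

definition g0col :: "('n \<Rightarrow> real^'p \<Rightarrow> real^'p) \<Rightarrow> (real^'p)^'n \<Rightarrow> (real^'p)^'n" where
  "g0col grad z = (\<chi> i. grad i (xbar z))"

definition eps1 :: "real^'n^'n \<Rightarrow> real \<Rightarrow> real \<Rightarrow> real \<Rightarrow> real" where
  "eps1 L \<alpha> \<beta> Lf = (\<alpha> - \<beta>) * rho2 L - (2 + 3 * Lf^2) / 2"

definition eps2 :: "real^'n^'n \<Rightarrow> real \<Rightarrow> real \<Rightarrow> real \<Rightarrow> real" where
  "eps2 L \<alpha> \<beta> Lf = \<beta>^2 * rho L + (2 * \<alpha>^2 + \<beta>^2) * (rho L)^2 + 5 / 2 * Lf^2"

definition eps3 :: "real^'n^'n \<Rightarrow> real \<Rightarrow> real \<Rightarrow> real" where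
  "eps3 L \<alpha> \<beta> = \<beta> - 1/2 - \<alpha> / (2 * \<beta>^2) - 1 / (2 * \<beta> * rho2 L)"

definition eps4 :: "real \<Rightarrow> real" where
  "eps4 \<beta> = 2 * \<beta>^2 + 1/2"

definition eps5 :: "real^'n^'n \<Rightarrow> real \<Rightarrow> real \<Rightarrow> real \<Rightarrow> real" where
  "eps5 L \<alpha> \<beta> Lf = 1/4 - 1 / (2 * \<beta>) * (1/\<beta> + 1 / rho2 L + \<alpha>/\<beta>) * Lf^2"

definition eps6 :: "real^'n^'n \<Rightarrow> real \<Rightarrow> real \<Rightarrow> real \<Rightarrow> real" where
  "eps6 L \<alpha> \<beta> Lf = 1 / \<beta>^2 * (1 + 1 / rho2 L + \<alpha>/\<beta>) * Lf^2 + Lf * (1 + Lf) / 2"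

definition lyapV :: "real^'n^'n \<Rightarrow> ('n \<Rightarrow> real^'p \<Rightarrow> real) \<Rightarrow> ('n \<Rightarrow> real^'p \<Rightarrow> real^'p)
    \<Rightarrow> real \<Rightarrow> real \<Rightarrow> (real^'p)^'n \<Rightarrow> (real^'p)^'n \<Rightarrow> real" where
  "lyapV L f grad \<alpha> \<beta> z w =
     (let u = w + (1/\<beta>) *\<^sub>R g0col grad z in
        1/2 * wnorm2 Kmat z + 1/2 * wnorm2 (pinv L + (\<alpha>/\<beta>) *\<^sub>R Kmat) u
        + kinner z Kmat u + real CARD('n) * (avgf f (xbar z) - fstar f))"

end

theory Submission
  imports Defs
begin


lemma sym_inner:
  fixes M :: "real^'n^'n"
  assumes "transpose M = M"
  shows "y \<bullet> (M *v z) = (M *v y) \<bullet> z"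
  by (metis assms dot_lmul_matrix transpose_matrix_vector)

definition kcomp :: "(real^'p)^'n \<Rightarrow> 'p \<Rightarrow> real^'n" where
  "kcomp z k = (\<chi> i. z$i$k)"

lemma comp_kmult: "kcomp (kmult M z) k = M *v kcomp z k"
  by (simp add: kcomp_def kmult_def matrix_vector_mult_def vec_eq_iff)

lemma inner_comp: "y \<bullet> z = (\<Sum>k\<in>UNIV. kcomp y k \<bullet> kcomp z k)"
  by (simp add: inner_vec_def kcomp_def) (rule sum.swap)

lemma comp_eq_iff: "y = z \<longleftrightarrow> (\<forall>k. kcomp y k = kcomp z k)"
  by (auto simp: kcomp_def vec_eq_iff)

lemma comp_add: "kcomp (y + z) k = kcomp y k + kcomp z k"
  and comp_diff: "kcomp (y - z) k = kcomp y k - kcomp z k"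
  and comp_scaleR: "kcomp (c *\<^sub>R z) k = c *\<^sub>R kcomp z k"
  and comp_minus: "kcomp (- z) k = - kcomp z k"
  and comp_zero: "kcomp 0 k = 0"
  by (simp_all add: kcomp_def vec_eq_iff)

lemma kmult_add: "kmult M (y + z) = kmult M y + kmult M z"
  by (simp add: comp_eq_iff comp_kmult comp_add matrix_vector_right_distrib)
lemma kmult_diff: "kmult M (y - z) = kmult M y - kmult M z"
  by (simp add: comp_eq_iff comp_kmult comp_diff matrix_vector_mult_diff_distrib)
lemma kmult_scaleR: "kmult M (c *\<^sub>R z) = c *\<^sub>R kmult M z"
  by (simp add: comp_eq_iff comp_kmult comp_scaleR matrix_scaleR_vector_ac scaleR_matrix_vector_assoc)
lemma kmult_minus: "kmult M (- z) = - kmult M z"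
  using kmult_scaleR[of M "-1" z] by simp
lemma kmult_zero: "kmult M 0 = 0"
  by (simp add: comp_eq_iff comp_kmult comp_zero)
lemma kmult_madd: "kmult (A + B) z = kmult A z + kmult B z"
  by (simp add: comp_eq_iff comp_kmult comp_add matrix_vector_mult_add_rdistrib)
lemma kmult_mdiff: "kmult (A - B) z = kmult A z - kmult B z"
  by (simp add: comp_eq_iff comp_kmult comp_diff matrix_vector_mult_diff_rdistrib)
lemma kmult_mscale: "kmult (c *\<^sub>R A) z = c *\<^sub>R kmult A z"
  by (simp add: comp_eq_iff comp_kmult comp_scaleR scaleR_matrix_vector_assoc)
lemma kmult_mult: "kmult (A ** B) z = kmult A (kmult B z)"
  by (simp add: comp_eq_iff comp_kmult matrix_vector_mul_assoc)
lemma kmult_id: "kmult (mat 1) z = z"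
  by (simp add: comp_eq_iff comp_kmult)
lemma kmult_mzero: "kmult 0 z = 0"
  by (simp add: kmult_def vec_eq_iff)

lemma kmult_sym:
  assumes "transpose M = M"
  shows "y \<bullet> kmult M z = kmult M y \<bullet> z"
  by (simp add: inner_comp comp_kmult sym_inner[OF assms])

lemmas kmult_lin = kmult_add kmult_diff kmult_scaleR kmult_minus kmult_zero

lemma ones_ones: "(ones_mat::real^'n^'n) ** ones_mat = real CARD('n) *\<^sub>R ones_mat"
  by (simp add: ones_mat_def matrix_matrix_mult_def vec_eq_iff)

lemma KH_sum: "Kmat + Hmat = mat 1"
  by (simp add: Kmat_def Hmat_def)

lemma HH: "(Hmat::real^'n^'n) ** Hmat = Hmat"
proof -
  have "(Hmat::real^'n^'n) ** Hmat = (1/real CARD('n))^2 *\<^sub>R (ones_mat ** ones_mat)"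
    by (simp add: Hmat_def matrix_scalar_ac scalar_matrix_assoc power2_eq_square)
  also have "\<dots> = Hmat" by (simp add: ones_ones Hmat_def power2_eq_square)
  finally show ?thesis .
qed

lemma Hv: "(Hmat::real^'n^'n) *v z = (\<chi> i. (1/real CARD('n)) * (\<Sum>j\<in>UNIV. z$j))"
  by (simp add: Hmat_def ones_mat_def matrix_vector_mult_def vec_eq_iff sum_distrib_left)

lemma Kv: "(Kmat::real^'n^'n) *v z = z - Hmat *v z"
  by (simp add: Kmat_def Hmat_def matrix_vector_mult_diff_rdistrib)

lemma HHv: "(Hmat::real^'n^'n) *v (Hmat *v z) = Hmat *v z"
  by (simp add: Hv vec_eq_iff)

lemma KHv: "(Kmat::real^'n^'n) *v (Hmat *v z) = 0"
  by (simp add: Kv HHv)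

lemma HKv: "(Hmat::real^'n^'n) *v (Kmat *v z) = 0"
  by (simp add: Kv HHv matrix_vector_mult_diff_distrib)

lemma KKv: "(Kmat::real^'n^'n) *v (Kmat *v z) = Kmat *v z"
  by (metis Kv HKv diff_zero)

lemma H_sym: "transpose (Hmat::real^'n^'n) = Hmat"
  by (simp add: Hmat_def ones_mat_def transpose_def vec_eq_iff)

lemma K_sym: "transpose (Kmat::real^'n^'n) = Kmat"
  by (simp add: Kmat_def ones_mat_def transpose_def vec_eq_iff mat_def)



section \<open>Laplacian\<close>

lemma lap_mv:
  assumes wg: "weighted_graph W"
  shows "(lap W *v z)$i = (\<Sum>j\<in>UNIV. W$i$j * (z$i - z$j))"
proof -
  have Wii: "W$i$i = 0" using wg by (simp add: weighted_graph_def)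
  have "(lap W *v z)$i = (\<Sum>j\<in>UNIV. (lap W)$i$j * z$j)"
    by (simp add: matrix_vector_mult_def)
  also have "\<dots> = (lap W)$i$i * z$i + (\<Sum>j\<in>UNIV-{i}. (lap W)$i$j * z$j)"
    by (simp add: sum.remove)
  also have "\<dots> = (\<Sum>j\<in>UNIV-{i}. W$i$j) * z$i + (\<Sum>j\<in>UNIV-{i}. - W$i$j * z$j)"
    by (simp add: lap_def)
  also have "\<dots> = (\<Sum>j\<in>UNIV-{i}. W$i$j * (z$i - z$j))"
  proof -
    have "(\<Sum>j\<in>UNIV-{i}. W$i$j * (z$i - z$j)) = (\<Sum>j\<in>UNIV-{i}. W$i$j * z$i) - (\<Sum>j\<in>UNIV-{i}. W$i$j * z$j)"
      by (simp add: right_diff_distrib sum_subtractf)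
    moreover have "(\<Sum>j\<in>UNIV-{i}. W$i$j * z$i) = (\<Sum>j\<in>UNIV-{i}. W$i$j) * z$i"
      by (simp add: sum_distrib_right)
    moreover have "(\<Sum>j\<in>UNIV-{i}. - W$i$j * z$j) = - (\<Sum>j\<in>UNIV-{i}. W$i$j * z$j)"
      by (simp add: sum_negf)
    ultimately show ?thesis by linarith
  qed
  also have "\<dots> = W$i$i * (z$i - z$i) + (\<Sum>j\<in>UNIV-{i}. W$i$j * (z$i - z$j))"
    by simp
  also have "\<dots> = (\<Sum>j\<in>UNIV. W$i$j * (z$i - z$j))"
    by (simp add: sum.remove[of UNIV i "\<lambda>j. W$i$j * (z$i - z$j)"])
  finally show ?thesis .
qed

lemma lap_sym:
  assumes wg: "weighted_graph W"
  shows "transpose (lap W) = lap W"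
  using wg by (auto simp: transpose_def lap_def vec_eq_iff weighted_graph_def)

lemma lap_quad:
  assumes wg: "weighted_graph W"
  shows "z \<bullet> (lap W *v z) = (1/2) * (\<Sum>i\<in>UNIV. \<Sum>j\<in>UNIV. W$i$j * (z$i - z$j)^2)"
proof -
  have sym: "\<And>i j. W$i$j = W$j$i" using wg by (simp add: weighted_graph_def)
  define S where "S = (\<Sum>i\<in>UNIV. \<Sum>j\<in>UNIV. W$i$j * (z$i * (z$i - z$j)))"
  have e1: "z \<bullet> (lap W *v z) = S"
    by (simp add: S_def inner_vec_def lap_mv[OF wg] sum_distrib_left algebra_simps)
  have "S = (\<Sum>j\<in>UNIV. \<Sum>i\<in>UNIV. W$i$j * (z$i * (z$i - z$j)))"
    unfolding S_def by (rule sum.swap)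
  also have "\<dots> = (\<Sum>i\<in>UNIV. \<Sum>j\<in>UNIV. W$i$j * (z$j * (z$j - z$i)))"
    by (simp add: sym)
  finally have e2: "S = (\<Sum>i\<in>UNIV. \<Sum>j\<in>UNIV. W$i$j * (z$j * (z$j - z$i)))" .
  have "S + S = (\<Sum>i\<in>UNIV. \<Sum>j\<in>UNIV. W$i$j * (z$i - z$j)^2)"
    apply (subst (2) e2) unfolding S_def
    by (simp add: sum.distrib[symmetric] power2_eq_square algebra_simps)
  then show ?thesis using e1 by simp
qed

lemma lap_psd:
  assumes wg: "weighted_graph W"
  shows "0 \<le> z \<bullet> (lap W *v z)"
proof -
  have "\<And>i j. 0 \<le> W$i$j" using wg by (simp add: weighted_graph_def)
  then show ?thesis by (simp add: lap_quad[OF wg] sum_nonneg)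
qed

lemma lap_sum:
  assumes wg: "weighted_graph W"
  shows "(\<Sum>i\<in>UNIV. (lap W *v z)$i) = 0"
proof -
  have sym: "\<And>i j. W$i$j = W$j$i" using wg by (simp add: weighted_graph_def)
  define S where "S = (\<Sum>i\<in>UNIV. \<Sum>j\<in>UNIV. W$i$j * (z$i - z$j))"
  have "S = (\<Sum>j\<in>UNIV. \<Sum>i\<in>UNIV. W$i$j * (z$i - z$j))"
    unfolding S_def by (rule sum.swap)
  also have "\<dots> = (\<Sum>i\<in>UNIV. \<Sum>j\<in>UNIV. W$i$j * (z$j - z$i))"
    by (simp add: sym)
  also have "\<dots> = - S"
    by (simp add: S_def sum_negf[symmetric] algebra_simps)
  finally have "S = 0" by simp
  then show ?thesis by (simp add: lap_mv[OF wg] S_def)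
qed

lemma lap_const:
  assumes wg: "weighted_graph W"
  shows "lap W *v (\<chi> i. c) = 0"
  by (simp add: vec_eq_iff lap_mv[OF wg])

lemma lap_zero_const:
  assumes wg: "weighted_graph W" and conn: "graph_connected W"
    and z0: "z \<bullet> (lap W *v z) = 0"
  shows "z$i = z$j"
proof -
  have nn: "\<And>i j. 0 \<le> W$i$j" using wg by (simp add: weighted_graph_def)
  have "(\<Sum>i\<in>UNIV. \<Sum>j\<in>UNIV. W$i$j * (z$i - z$j)^2) = 0"
    using z0 by (simp add: lap_quad[OF wg])
  then have "\<forall>i\<in>UNIV. (\<Sum>j\<in>UNIV. W$i$j * (z$i - z$j)^2) = 0"
    by (subst sum_nonneg_eq_0_iff[symmetric]) (auto intro!: sum_nonneg simp: nn)
  then have "\<forall>i j. W$i$j * (z$i - z$j)^2 = 0"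
    using sum_nonneg_eq_0_iff[of UNIV "\<lambda>j. W$_$j * (z$_ - z$j)^2"] nn by auto
  then have edge: "\<And>a b. 0 < W$a$b \<Longrightarrow> z$a = z$b" by (metis less_irrefl power_zero_numeral right_minus_eq mult_eq_0_iff power_eq_0_iff)
  have "(i, j) \<in> {(a, b). 0 < W$a$b}\<^sup>*" using conn by (simp add: graph_connected_def)
  then show ?thesis
  proof (induction rule: rtrancl_induct)
    case base then show ?case by simp
  next
    case (step y w) then show ?case using edge by auto
  qed
qed



section \<open>Symmetric PSD matrices\<close>

lemma psd_zero:
  fixes M :: "real^'n^'n"
  assumes sym: "transpose M = M" and psd: "\<And>y. 0 \<le> y \<bullet> (M *v y)"
    and z0: "z \<bullet> (M *v z) = 0"
  shows "M *v z = 0"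
proof (rule ccontr)
  assume ne: "M *v z \<noteq> 0"
  define w where "w = M *v z"
  define q where "q = w \<bullet> (M *v w)"
  have q0: "0 \<le> q" using psd by (simp add: q_def)
  have ww: "0 < w \<bullet> w" using ne by (simp add: w_def)
  define s where "s = (w \<bullet> w) / (q + 1)"
  have s0: "0 < s" using ww q0 by (simp add: s_def)
  have zw: "z \<bullet> (M *v w) = w \<bullet> w" using sym_inner[OF sym, of z w] by (simp add: w_def)
  have "0 \<le> (z - s *\<^sub>R w) \<bullet> (M *v (z - s *\<^sub>R w))" by (rule psd)
  also have "\<dots> = z \<bullet> (M *v z) - 2 * s * (w \<bullet> w) + s^2 * q"
    using zw by (simp add: matrix_vector_mult_diff_distrib matrix_scaleR_vector_ac
        scaleR_matrix_vector_assoc[symmetric] inner_diff_left inner_diff_right q_def w_def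
        power2_eq_square algebra_simps inner_commute)
  finally have "2 * s * (w \<bullet> w) \<le> s^2 * q" using z0 by simp
  then have "2 * (w \<bullet> w) \<le> s * q" using s0 by (simp add: power2_eq_square)
  also have "s * q = (w \<bullet> w) * (q / (q + 1))" using q0 by (simp add: s_def)
  also have "\<dots> < (w \<bullet> w) * 1" using q0 ww by (intro mult_strict_left_mono) auto
  finally show False using ww by simp
qed

lemma psd_cs:
  fixes M :: "real^'n^'n"
  assumes sym: "transpose M = M" and psd: "\<And>y. 0 \<le> y \<bullet> (M *v y)"
  shows "(y \<bullet> (M *v z))^2 \<le> (y \<bullet> (M *v y)) * (z \<bullet> (M *v z))"
proof (cases "z \<bullet> (M *v z) = 0")
  case True
  then have "M *v z = 0" using psd_zero[OF sym psd] by blast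
  then show ?thesis using True by simp
next
  case False
  define c where "c = z \<bullet> (M *v z)"
  have c0: "0 < c" using False psd[of z] by (simp add: c_def)
  define t where "t = (y \<bullet> (M *v z)) / c"
  have zy: "z \<bullet> (M *v y) = y \<bullet> (M *v z)" using sym_inner[OF sym, of z y] by (simp add: inner_commute)
  have "0 \<le> (y - t *\<^sub>R z) \<bullet> (M *v (y - t *\<^sub>R z))" by (rule psd)
  also have "\<dots> = y \<bullet> (M *v y) - 2 * t * (y \<bullet> (M *v z)) + t^2 * c"
    using zy by (simp add: matrix_vector_mult_diff_distrib matrix_scaleR_vector_ac
        scaleR_matrix_vector_assoc[symmetric] inner_diff_left inner_diff_right c_def
        power2_eq_square algebra_simps)
  also have "\<dots> = y \<bullet> (M *v y) - (y \<bullet> (M *v z))^2 / c"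
    using c0 by (simp add: t_def power2_eq_square field_simps)
  finally have "(y \<bullet> (M *v z))^2 / c \<le> y \<bullet> (M *v y)" by simp
  then show ?thesis using c0 by (simp add: c_def[symmetric] field_simps)
qed

lemma eig_finite:
  fixes A :: "real^'n^'n"
  assumes sym: "transpose A = A"
  shows "finite {c. is_eigenvalue A c}"
proof -
  define E where "E = {c. is_eigenvalue A c}"
  define ev where "ev c = (SOME v. v \<noteq> 0 \<and> A *v v = c *\<^sub>R v)" for c
  have evp: "ev c \<noteq> 0 \<and> A *v ev c = c *\<^sub>R ev c" if "c \<in> E" for c
  proof -
    have "\<exists>v. v \<noteq> 0 \<and> A *v v = c *\<^sub>R v" using that by (simp add: E_def is_eigenvalue_def)
    then show ?thesis unfolding ev_def by (rule someI_ex)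
  qed
  have orth: "ev c \<bullet> ev d = 0" if "c \<in> E" "d \<in> E" "c \<noteq> d" for c d
  proof -
    have "ev c \<bullet> (A *v ev d) = (A *v ev c) \<bullet> ev d" by (rule sym_inner[OF sym])
    then have "d * (ev c \<bullet> ev d) = c * (ev c \<bullet> ev d)" using evp[OF that(1)] evp[OF that(2)] by simp
    then show ?thesis using that(3) by simp
  qed
  have inj: "inj_on ev E"
  proof (rule inj_onI)
    fix c d assume "c \<in> E" "d \<in> E" "ev c = ev d"
    then have "c *\<^sub>R ev c = d *\<^sub>R ev c" using evp by metis
    then show "c = d" using evp[OF \<open>c \<in> E\<close>] by (simp add: scaleR_cancel_right)
  qed
  have "pairwise orthogonal (ev ` E)"
    unfolding pairwise_def orthogonal_def using orth by auto
  moreover have "0 \<notin> ev ` E" using evp by auto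
  ultimately have "independent (ev ` E)" by (rule pairwise_orthogonal_independent)
  then have "finite (ev ` E)" using independent_bound by blast
  then show ?thesis using inj finite_imageD unfolding E_def by blast
qed

lemma scale_unit:
  fixes z :: "real^'n"
  assumes "z \<noteq> 0"
  shows "z \<bullet> (A *v z) = (norm z)^2 * ((z /\<^sub>R norm z) \<bullet> (A *v (z /\<^sub>R norm z)))"
  using assms by (simp add: matrix_scaleR_vector_ac scaleR_matrix_vector_assoc[symmetric] power2_eq_square) (simp add: field_simps)

lemma rayleigh_max:
  fixes A :: "real^'n^'n"
  assumes sym: "transpose A = A"
  shows "\<exists>l. is_eigenvalue A l \<and> (\<forall>z. z \<bullet> (A *v z) \<le> l * (z \<bullet> z))"
proof -
  have "\<exists>x\<in>sphere 0 1. \<forall>y\<in>sphere 0 1. y \<bullet> (A *v y) \<le> x \<bullet> (A *v x)"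
    by (rule continuous_attains_sup) (auto intro!: continuous_intros)
  then obtain x where x1: "norm x = 1" and xm: "\<And>y. norm y = 1 \<Longrightarrow> y \<bullet> (A *v y) \<le> x \<bullet> (A *v x)"
    by auto
  define l where "l = x \<bullet> (A *v x)"
  have bnd: "z \<bullet> (A *v z) \<le> l * (z \<bullet> z)" for z
  proof (cases "z = 0")
    case True then show ?thesis by simp
  next
    case False
    have "(z /\<^sub>R norm z) \<bullet> (A *v (z /\<^sub>R norm z)) \<le> l" using xm[of "z /\<^sub>R norm z"] False by (simp add: l_def)
    then have "(norm z)^2 * ((z /\<^sub>R norm z) \<bullet> (A *v (z /\<^sub>R norm z))) \<le> (norm z)^2 * l"
      by (simp add: mult_left_mono)
    then show ?thesis using scale_unit[OF False, of A] by (simp add: power2_norm_eq_inner mult.commute)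
  qed
  define M where "M = l *\<^sub>R mat 1 - A"
  have Mv: "M *v y = l *\<^sub>R y - A *v y" for y
    by (simp add: M_def matrix_vector_mult_diff_rdistrib scaleR_matrix_vector_assoc[symmetric])
  have Msym: "transpose M = M" using sym by (simp add: M_def transpose_def vec_eq_iff mat_def)
  have Mpsd: "0 \<le> y \<bullet> (M *v y)" for y using bnd[of y] by (simp add: Mv inner_diff_right)
  have "x \<bullet> (M *v x) = 0" using x1 by (simp add: Mv inner_diff_right l_def power2_norm_eq_inner[symmetric])
  then have "M *v x = 0" by (rule psd_zero[OF Msym Mpsd])
  then have "A *v x = l *\<^sub>R x" by (simp add: Mv)
  moreover have "x \<noteq> 0" using x1 by auto
  ultimately have "is_eigenvalue A l" by (auto simp: is_eigenvalue_def)
  then show ?thesis using bnd by blast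
qed



lemma one_vec_inner: "z \<bullet> (\<chi> i. (1::real)) = (\<Sum>i\<in>UNIV. z$i)"
  by (simp add: inner_vec_def)

lemma Hv_inner: "(Hmat::real^'n^'n) *v z = (\<chi> i. (1/real CARD('n)) * (z \<bullet> (\<chi> i. 1)))"
  by (simp add: Hv one_vec_inner)

lemma LKv:
  assumes wg: "weighted_graph W"
  shows "lap W *v (Kmat *v z) = lap W *v z"
  by (simp add: Kv matrix_vector_mult_diff_distrib Hv lap_const[OF wg])

lemma KLv:
  assumes wg: "weighted_graph W"
  shows "Kmat *v (lap W *v z) = lap W *v z"
  by (simp add: Kv Hv lap_sum[OF wg] vec_eq_iff)

lemma HLv:
  assumes wg: "weighted_graph W"
  shows "Hmat *v (lap W *v z) = 0"
  by (simp add: Hv lap_sum[OF wg] vec_eq_iff)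

lemma quadK:
  assumes wg: "weighted_graph W"
  shows "(Kmat *v z) \<bullet> (lap W *v (Kmat *v z)) = z \<bullet> (lap W *v z)"
proof -
  have "(Kmat *v z) \<bullet> (lap W *v (Kmat *v z)) = (Kmat *v z) \<bullet> (lap W *v z)" by (simp add: LKv[OF wg])
  also have "\<dots> = z \<bullet> (Kmat *v (lap W *v z))" using sym_inner[OF K_sym, of z] by simp
  finally show ?thesis by (simp add: KLv[OF wg])
qed

lemma normK: "z \<bullet> ((Kmat::real^'n^'n) *v z) = (Kmat *v z) \<bullet> (Kmat *v z)"
  using sym_inner[OF K_sym, of z "Kmat *v z"] by (simp add: KKv)

lemma sum0_K:
  assumes "z \<bullet> (\<chi> i. (1::real)) = 0"
  shows "(Kmat::real^'n^'n) *v z = z"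
  using assms by (simp add: Kv Hv_inner vec_eq_iff)

lemma K_sum0: "((Kmat::real^'n^'n) *v z) \<bullet> (\<chi> i. 1) = 0"
proof -
  have "((Kmat::real^'n^'n) *v z) \<bullet> (\<chi> i. 1) = z \<bullet> (Kmat *v (\<chi> i. 1))"
    using sym_inner[OF K_sym, of z "(\<chi> i. 1)"] by simp
  also have "Kmat *v (\<chi> i. (1::real)) = 0" by (simp add: Kv Hv vec_eq_iff)
  finally show ?thesis by simp
qed

lemma rayleigh_min:
  assumes n2: "CARD('n) \<ge> 2" and wg: "weighted_graph (W::real^'n^'n)" and conn: "graph_connected W"
  shows "\<exists>l>0. is_eigenvalue (lap W) l \<and> (\<forall>z. l * ((Kmat *v z) \<bullet> (Kmat *v z)) \<le> z \<bullet> (lap W *v z))"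
proof -
  define one where "one = (\<chi> i::'n. (1::real))"
  define T where "T = sphere (0::real^'n) 1 \<inter> {z. z \<bullet> one = 0}"
  have cT: "compact T" unfolding T_def
    by (intro compact_Int_closed compact_sphere closed_Collect_eq) (auto intro!: continuous_intros)
  obtain i j :: 'n where ij: "i \<noteq> j"
  proof -
    have "\<not> (\<forall>i j::'n. i = j)"
    proof
      assume "\<forall>i j::'n. i = j"
      then have "card (UNIV::'n set) \<le> 1" by (simp add: card_le_Suc0_iff_eq)
      with n2 show False by simp
    qed
    then show ?thesis using that by blast
  qed
  define y where "y = axis i (1::real) - axis j 1"
  have y0: "y \<noteq> 0" using ij by (simp add: y_def vec_eq_iff axis_def) (metis)
  have y1: "y \<bullet> one = 0" by (simp add: y_def one_def inner_diff_left inner_vec_def axis_def sum_subtractf)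
  have "y /\<^sub>R norm y \<in> T" using y0 y1 by (simp add: T_def)
  then have "T \<noteq> {}" by auto
  then have "\<exists>x\<in>T. \<forall>z\<in>T. x \<bullet> (lap W *v x) \<le> z \<bullet> (lap W *v z)"
    by (intro continuous_attains_inf cT) (auto intro!: continuous_intros)
  then obtain x where xT: "x \<in> T" and xm: "\<And>z. z \<in> T \<Longrightarrow> x \<bullet> (lap W *v x) \<le> z \<bullet> (lap W *v z)"
    by auto
  have x1: "norm x = 1" and xs: "x \<bullet> one = 0" using xT by (auto simp: T_def)
  define l where "l = x \<bullet> (lap W *v x)"
  have bnd0: "l * (z \<bullet> z) \<le> z \<bullet> (lap W *v z)" if "z \<bullet> one = 0" for z
  proof (cases "z = 0")
    case True then show ?thesis by simp
  next
    case False
    have "z /\<^sub>R norm z \<in> T" using False that by (simp add: T_def)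
    then have "l \<le> (z /\<^sub>R norm z) \<bullet> (lap W *v (z /\<^sub>R norm z))" using xm unfolding l_def by blast
    then have "(norm z)^2 * l \<le> (norm z)^2 * ((z /\<^sub>R norm z) \<bullet> (lap W *v (z /\<^sub>R norm z)))"
      by (simp add: mult_left_mono)
    then show ?thesis using scale_unit[OF False, of "lap W"] by (simp add: power2_norm_eq_inner mult.commute)
  qed
  have bnd: "l * ((Kmat *v z) \<bullet> (Kmat *v z)) \<le> z \<bullet> (lap W *v z)" for z
    using bnd0[of "Kmat *v z"] K_sum0[of z] quadK[OF wg, of z] by (simp add: one_def)
  define M where "M = lap W - l *\<^sub>R Kmat"
  have Mv: "M *v z = lap W *v z - l *\<^sub>R (Kmat *v z)" for z
    by (simp add: M_def matrix_vector_mult_diff_rdistrib scaleR_matrix_vector_assoc[symmetric])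
  have Msym: "transpose M = M"
    using lap_sym[OF wg] K_sym by (simp add: M_def transpose_def vec_eq_iff) blast
  have Mpsd: "0 \<le> z \<bullet> (M *v z)" for z
    using bnd[of z] normK[of z] by (simp add: Mv inner_diff_right)
  have Kx: "Kmat *v x = x" using xs sum0_K by (simp add: one_def)
  have "x \<bullet> (M *v x) = 0"
    using x1 Kx by (simp add: Mv inner_diff_right l_def power2_norm_eq_inner[symmetric])
  then have "M *v x = 0" by (rule psd_zero[OF Msym Mpsd])
  then have ev: "lap W *v x = l *\<^sub>R x" using Kx by (simp add: Mv)
  have x0: "x \<noteq> 0" using x1 by auto
  have l0: "0 \<le> l" using lap_psd[OF wg] by (simp add: l_def)
  have "l \<noteq> 0"
  proof
    assume "l = 0"
    then have c: "\<And>a b. x$a = x$b" using lap_zero_const[OF wg conn] by (simp add: l_def)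
    have "(\<Sum>a\<in>UNIV. x$a) = real CARD('n) * x$i" using c by (metis (no_types) sum_constant of_nat_mult mult.commute sum.cong)
    then have "x$i = 0" using xs by (simp add: one_vec_inner one_def)
    then have "x = 0" using c by (metis vec_eq_iff zero_index)
    then show False using x0 by simp
  qed
  then have "0 < l" using l0 by simp
  moreover have "is_eigenvalue (lap W) l" using ev x0 by (auto simp: is_eigenvalue_def)
  ultimately show ?thesis using bnd by blast
qed



lemma spectral:
  assumes n2: "CARD('n) \<ge> 2" and wg: "weighted_graph (W::real^'n^'n)" and conn: "graph_connected W"
  shows "0 < rho2 (lap W)" "rho2 (lap W) \<le> rho (lap W)"
    "\<And>z. rho2 (lap W) * ((Kmat *v z) \<bullet> (Kmat *v z)) \<le> z \<bullet> (lap W *v z)"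
    "\<And>z. z \<bullet> (lap W *v z) \<le> rho (lap W) * ((Kmat *v z) \<bullet> (Kmat *v z))"
    "\<And>z. (lap W *v z) \<bullet> (lap W *v z) \<le> (rho (lap W))^2 * ((Kmat *v z) \<bullet> (Kmat *v z))"
proof -
  define E where "E = {c. is_eigenvalue (lap W) c}"
  have fE: "finite E" unfolding E_def by (rule eig_finite[OF lap_sym[OF wg]])
  obtain l1 where l1E: "is_eigenvalue (lap W) l1" and l1b: "\<And>z. z \<bullet> (lap W *v z) \<le> l1 * (z \<bullet> z)"
    using rayleigh_max[OF lap_sym[OF wg]] by blast
  obtain l2 where l2p: "0 < l2" and l2E: "is_eigenvalue (lap W) l2"
    and l2b: "\<And>z. l2 * ((Kmat *v z) \<bullet> (Kmat *v z)) \<le> z \<bullet> (lap W *v z)"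
    using rayleigh_min[OF n2 wg conn] by blast
  have rho1: "l1 \<le> rho (lap W)" unfolding rho_def using fE l1E E_def by (intro Max_ge) auto
  define E2 where "E2 = {c. 0 < c \<and> is_eigenvalue (lap W) c}"
  have fE2: "finite E2" using fE by (rule rev_finite_subset) (auto simp: E_def E2_def)
  have ne2: "E2 \<noteq> {}" using l2p l2E by (auto simp: E2_def)
  have r2in: "rho2 (lap W) \<in> E2" unfolding rho2_def E2_def[symmetric] using fE2 ne2 by (rule Min_in)
  have r2le: "rho2 (lap W) \<le> l2" unfolding rho2_def E2_def[symmetric] using fE2 l2p l2E by (intro Min_le) (auto simp: E2_def)
  show pos: "0 < rho2 (lap W)" using r2in by (simp add: E2_def)
  show "rho2 (lap W) \<le> rho (lap W)" unfolding rho_def using fE r2in by (intro Max_ge) (auto simp: E_def E2_def)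
  show low: "rho2 (lap W) * ((Kmat *v z) \<bullet> (Kmat *v z)) \<le> z \<bullet> (lap W *v z)" for z
    using l2b[of z] r2le by (smt (verit) inner_ge_zero mult_right_mono)
  show up: "z \<bullet> (lap W *v z) \<le> rho (lap W) * ((Kmat *v z) \<bullet> (Kmat *v z))" for z
  proof -
    have "z \<bullet> (lap W *v z) = (Kmat *v z) \<bullet> (lap W *v (Kmat *v z))" by (simp add: quadK[OF wg])
    also have "\<dots> \<le> l1 * ((Kmat *v z) \<bullet> (Kmat *v z))" by (rule l1b)
    also have "\<dots> \<le> rho (lap W) * ((Kmat *v z) \<bullet> (Kmat *v z))" using rho1 by (simp add: mult_right_mono)
    finally show ?thesis .
  qed
  show "(lap W *v z) \<bullet> (lap W *v z) \<le> (rho (lap W))^2 * ((Kmat *v z) \<bullet> (Kmat *v z))" for z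
  proof -
    define p where "p = lap W *v z"
    have psd: "\<And>y. 0 \<le> y \<bullet> (lap W *v y)" by (rule lap_psd[OF wg])
    have cs: "(p \<bullet> (lap W *v z))^2 \<le> (p \<bullet> (lap W *v p)) * (z \<bullet> (lap W *v z))"
      by (rule psd_cs[OF lap_sym[OF wg] psd])
    have r0: "0 \<le> rho (lap W)" using pos \<open>rho2 (lap W) \<le> rho (lap W)\<close> by simp
    have a: "p \<bullet> (lap W *v p) \<le> rho (lap W) * (p \<bullet> p)"
      using l1b[of p] rho1 by (smt (verit) inner_ge_zero mult_right_mono)
    have "(p \<bullet> p)^2 \<le> (rho (lap W) * (p \<bullet> p)) * (rho (lap W) * ((Kmat *v z) \<bullet> (Kmat *v z)))"
      using cs a up[of z] psd[of p] psd[of z] by (simp add: p_def) (smt (verit) mult_mono)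
    then have "(p \<bullet> p) * (p \<bullet> p) \<le> (p \<bullet> p) * ((rho (lap W))^2 * ((Kmat *v z) \<bullet> (Kmat *v z)))"
      by (simp add: power2_eq_square algebra_simps)
    then show ?thesis
      by (cases "p \<bullet> p = 0") (auto simp: p_def intro: order_trans[OF _ mult_nonneg_nonneg])
  qed
qed



lemma inner_sym_transpose:
  fixes A :: "real^'n^'n"
  assumes "\<And>y z. y \<bullet> (A *v z) = (A *v y) \<bullet> z"
  shows "transpose A = A"
proof -
  have "A$j$i = A$i$j" for i j
  proof -
    have "axis i 1 \<bullet> (A *v axis j 1) = (A *v axis i 1) \<bullet> axis j 1" by (rule assms)
    then show ?thesis by (simp add: inner_vec_def axis_def matrix_vector_mult_def if_distrib if_distribR sum.delta cong: if_cong)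
  qed
  then show ?thesis by (simp add: transpose_def vec_eq_iff)
qed

lemma Hquad: "z \<bullet> ((Hmat::real^'n^'n) *v z) = (Hmat *v z) \<bullet> (Hmat *v z)"
  using sym_inner[OF H_sym, of z "Hmat *v z"] by (simp add: HHv)

lemma pinv_props:
  assumes wg: "weighted_graph (W::real^'n^'n)" and conn: "graph_connected W"
  shows "\<And>z. lap W *v (pinv (lap W) *v z) = Kmat *v z"
    "\<And>z. pinv (lap W) *v (lap W *v z) = Kmat *v z"
    "\<And>z. Kmat *v (pinv (lap W) *v z) = pinv (lap W) *v z"
    "\<And>z. pinv (lap W) *v (Kmat *v z) = pinv (lap W) *v z"
    "transpose (pinv (lap W)) = pinv (lap W)"
proof -
  define A where "A = lap W"
  define M0 where "M0 = A + Hmat"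
  have M0v: "M0 *v z = A *v z + Hmat *v z" for z by (simp add: M0_def matrix_vector_mult_add_rdistrib)
  have Asym: "transpose A = A" by (simp add: A_def lap_sym[OF wg])
  have M0sym: "transpose M0 = M0" using Asym H_sym by (simp add: M0_def transpose_def vec_eq_iff)
  have AH: "A *v (Hmat *v z) = 0" for z by (simp add: A_def Hv lap_const[OF wg])
  have HA: "Hmat *v (A *v z) = 0" for z by (simp add: A_def HLv[OF wg])
  have inj: "\<forall>z. M0 *v z = 0 \<longrightarrow> z = 0"
  proof (intro allI impI)
    fix z assume "M0 *v z = 0"
    then have "z \<bullet> (A *v z) + (Hmat *v z) \<bullet> (Hmat *v z) = 0"
      by (metis M0v Hquad inner_add_right inner_zero_right)
    moreover have "0 \<le> z \<bullet> (A *v z)" by (simp add: A_def lap_psd[OF wg])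
    ultimately have z1: "z \<bullet> (A *v z) = 0" and z2: "(Hmat *v z) \<bullet> (Hmat *v z) = 0"
      by (smt (verit) inner_ge_zero)+
    have c: "\<And>a b. z$a = z$b" using lap_zero_const[OF wg conn] z1 by (simp add: A_def)
    have "Hmat *v z = z"
    proof -
      have "(\<Sum>j\<in>UNIV. z$j) = (\<Sum>j::'n\<in>UNIV. z$i)" for i by (rule sum.cong[OF refl]) (rule c)
      then show ?thesis by (simp add: Hv vec_eq_iff field_simps)
    qed
    then show "z = 0" using z2 by simp
  qed
  then obtain B where BM: "B ** M0 = mat 1" using matrix_left_invertible_ker by blast
  then have MB: "M0 ** B = mat 1" using matrix_left_right_inverse by blast
  have BMv: "B *v (M0 *v z) = z" for z by (simp add: matrix_vector_mul_assoc BM)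
  have MBv: "M0 *v (B *v z) = z" for z by (simp add: matrix_vector_mul_assoc MB)
  have BH: "B *v (Hmat *v z) = Hmat *v z" for z
    using BMv[of "Hmat *v z"] by (simp add: M0v AH HHv)
  have HB: "Hmat *v (B *v z) = Hmat *v z" for z
    using arg_cong[OF MBv[of z], of "\<lambda>v. Hmat *v v"] by (simp add: M0v matrix_vector_right_distrib HA HHv)
  have Bsym_in: "y \<bullet> (B *v z) = (B *v y) \<bullet> z" for y z
  proof -
    have "y \<bullet> (B *v z) = (M0 *v (B *v y)) \<bullet> (B *v z)" by (simp add: MBv)
    also have "\<dots> = (B *v y) \<bullet> (M0 *v (B *v z))" using sym_inner[OF M0sym] by simp
    finally show ?thesis by (simp add: MBv)
  qed
  have Bsym: "transpose B = B" by (rule inner_sym_transpose[OF Bsym_in])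
  define Q where "Q = B - Hmat"
  have Qv: "Q *v z = B *v z - Hmat *v z" for z by (simp add: Q_def matrix_vector_mult_diff_rdistrib)
  have Qsym: "transpose Q = Q" using Bsym H_sym by (simp add: Q_def transpose_def vec_eq_iff)
  have AQ: "A *v (Q *v z) = Kmat *v z" for z
  proof -
    have "A *v (B *v z) = M0 *v (B *v z) - Hmat *v (B *v z)" by (simp add: M0v)
    then show ?thesis by (simp add: Qv matrix_vector_mult_diff_distrib AH MBv HB Kv)
  qed
  have QA: "Q *v (A *v z) = Kmat *v z" for z
  proof -
    have "A *v z = M0 *v z - Hmat *v z" by (simp add: M0v)
    then have "B *v (A *v z) = z - Hmat *v z" by (simp add: matrix_vector_mult_diff_distrib BMv BH)
    then show ?thesis by (simp add: Qv HA Kv)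
  qed
  have KQ: "Kmat *v (Q *v z) = Q *v z" for z
    by (simp add: Kv Qv matrix_vector_mult_diff_distrib HB HHv)
  have QK: "Q *v (Kmat *v z) = Q *v z" for z
    by (simp add: Kv Qv matrix_vector_mult_diff_distrib BH HHv)
  have mAQ: "A ** Q = Kmat" by (simp add: matrix_eq matrix_vector_mul_assoc[symmetric] AQ)
  have mQA: "Q ** A = Kmat" by (simp add: matrix_eq matrix_vector_mul_assoc[symmetric] QA)
  have mKQ: "Kmat ** Q = Q" by (simp add: matrix_eq matrix_vector_mul_assoc[symmetric] KQ)
  have mQK: "Q ** Kmat = Q" by (simp add: matrix_eq matrix_vector_mul_assoc[symmetric] QK)
  have mKA: "Kmat ** A = A" by (simp add: matrix_eq matrix_vector_mul_assoc[symmetric] A_def KLv[OF wg])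
  have pen: "A ** Q ** A = A \<and> Q ** A ** Q = Q \<and> transpose (A ** Q) = A ** Q \<and> transpose (Q ** A) = Q ** A"
    by (simp add: mAQ mQA mKQ mKA K_sym matrix_mul_assoc[symmetric])
  have uniq: "Y = Q" if Y: "A ** Y ** A = A \<and> Y ** A ** Y = Y \<and> transpose (A ** Y) = A ** Y \<and> transpose (Y ** A) = Y ** A" for Y
  proof -
    have y1: "A ** Y ** A = A" and y2: "Y ** A ** Y = Y" and y3: "transpose (A ** Y) = A ** Y"
      and y4: "transpose (Y ** A) = Y ** A" using Y by auto
    have "A ** Y = Kmat ** (A ** Y)"
      by (metis mAQ mKA matrix_mul_assoc)
    moreover have "Kmat = (A ** Y) ** Kmat" by (metis mAQ y1 matrix_mul_assoc)
    then have "Kmat = Kmat ** (A ** Y)"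
      by (metis K_sym y3 matrix_transpose_mul)
    ultimately have AY: "A ** Y = Kmat" by simp
    have pA: "A ** Q ** A = A" using pen by simp
    have "Y ** A = Y ** (A ** Q ** A)" using pA by simp
    also have "\<dots> = (Y ** A) ** (Q ** A)" by (simp add: matrix_mul_assoc)
    finally have ya1: "Y ** A = (Y ** A) ** Kmat" by (simp add: mQA)
    have "Kmat = Q ** (A ** Y ** A)" using y1 mQA by simp
    also have "\<dots> = (Q ** A) ** (Y ** A)" by (simp add: matrix_mul_assoc)
    finally have "Kmat = Kmat ** (Y ** A)" by (simp add: mQA)
    then have "transpose Kmat = transpose (Kmat ** (Y ** A))" by simp
    moreover have "transpose (Kmat ** (Y ** A)) = (Y ** A) ** Kmat" by (subst matrix_transpose_mul) (simp only: y4 K_sym)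
    ultimately have "Kmat = (Y ** A) ** Kmat" by (metis K_sym)
    moreover note ya1
    ultimately have YA: "Y ** A = Kmat" by simp
    have "Y = Kmat ** Y" using y2 YA by simp
    also have "\<dots> = Q ** (A ** Y)" by (metis mQA matrix_mul_assoc)
    also have "\<dots> = Q" by (simp add: AY mQK)
    finally show ?thesis .
  qed
  have pQ: "pinv A = Q" unfolding pinv_def
  proof (rule the_equality)
    show "A ** Q ** A = A \<and> Q ** A ** Q = Q \<and> transpose (A ** Q) = A ** Q \<and> transpose (Q ** A) = Q ** A" by (rule pen)
  qed (rule uniq)
  show "lap W *v (pinv (lap W) *v z) = Kmat *v z" for z using AQ pQ A_def by simp
  show "pinv (lap W) *v (lap W *v z) = Kmat *v z" for z using QA pQ A_def by simp
  show "Kmat *v (pinv (lap W) *v z) = pinv (lap W) *v z" for z using KQ pQ A_def by simp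
  show "pinv (lap W) *v (Kmat *v z) = pinv (lap W) *v z" for z using QK pQ A_def by simp
  show "transpose (pinv (lap W)) = pinv (lap W)" using Qsym pQ A_def by simp
qed



section \<open>Stacked operators\<close>

lemma kcomp_eqI: "(\<And>k. kcomp y k = kcomp z k) \<Longrightarrow> y = z"
  using comp_eq_iff by blast

lemma kK_def: "kmult Kmat z = z - kmult Hmat z"
  by (rule kcomp_eqI) (simp add: comp_kmult comp_diff Kv)
lemma kKK: "kmult Kmat (kmult Kmat z) = kmult Kmat z"
  by (rule kcomp_eqI) (simp add: comp_kmult KKv)
lemma kKH: "kmult Kmat (kmult Hmat z) = 0"
  by (rule kcomp_eqI) (simp add: comp_kmult KHv comp_zero)
lemma kHK: "kmult Hmat (kmult Kmat z) = 0"
  by (rule kcomp_eqI) (simp add: comp_kmult HKv comp_zero)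

context
  fixes W :: "real^'n^'n"
  assumes wg: "weighted_graph W" and conn: "graph_connected W"
begin

lemma kLK: "kmult (lap W) (kmult Kmat z) = kmult (lap W) z"
  by (rule kcomp_eqI) (simp add: comp_kmult LKv[OF wg])
lemma kKL: "kmult Kmat (kmult (lap W) z) = kmult (lap W) z"
  by (rule kcomp_eqI) (simp add: comp_kmult KLv[OF wg])
lemma kHL: "kmult Hmat (kmult (lap W) z) = 0"
  by (rule kcomp_eqI) (simp add: comp_kmult HLv[OF wg] comp_zero)
lemma kLQ: "kmult (lap W) (kmult (pinv (lap W)) z) = kmult Kmat z"
  by (rule kcomp_eqI) (simp add: comp_kmult pinv_props(1)[OF wg conn])
lemma kQL: "kmult (pinv (lap W)) (kmult (lap W) z) = kmult Kmat z"
  by (rule kcomp_eqI) (simp add: comp_kmult pinv_props(2)[OF wg conn])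
lemma kKQ: "kmult Kmat (kmult (pinv (lap W)) z) = kmult (pinv (lap W)) z"
  by (rule kcomp_eqI) (simp add: comp_kmult pinv_props(3)[OF wg conn])
lemma kQK: "kmult (pinv (lap W)) (kmult Kmat z) = kmult (pinv (lap W)) z"
  by (rule kcomp_eqI) (simp add: comp_kmult pinv_props(4)[OF wg conn])

lemma L_sym': "transpose (lap W) = lap W" by (rule lap_sym[OF wg])
lemma Q_sym': "transpose (pinv (lap W)) = pinv (lap W)" by (rule pinv_props(5)[OF wg conn])

end

lemma normK_le: "kmult Kmat z \<bullet> kmult Kmat z \<le> z \<bullet> z"
  and normH_le: "kmult Hmat z \<bullet> kmult Hmat z \<le> z \<bullet> z"
proof -
  have z: "z = kmult Kmat z + kmult Hmat z" by (simp add: kK_def)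
  have o: "kmult Kmat z \<bullet> kmult Hmat z = 0"
    using kmult_sym[OF K_sym, of z "kmult Hmat z"] by (simp add: kKH)
  have "z \<bullet> z = (kmult Kmat z + kmult Hmat z) \<bullet> (kmult Kmat z + kmult Hmat z)" using z by metis
  also have "\<dots> = kmult Kmat z \<bullet> kmult Kmat z + 2 * (kmult Kmat z \<bullet> kmult Hmat z) + kmult Hmat z \<bullet> kmult Hmat z"
    by (simp only: inner_add_left inner_add_right inner_commute[of "kmult Hmat z" "kmult Kmat z"])
  finally have "z \<bullet> z = kmult Kmat z \<bullet> kmult Kmat z + kmult Hmat z \<bullet> kmult Hmat z" using o by simp
  then show "kmult Kmat z \<bullet> kmult Kmat z \<le> z \<bullet> z" "kmult Hmat z \<bullet> kmult Hmat z \<le> z \<bullet> z"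
    by (simp_all add: inner_ge_zero)
qed

lemma wnormK: "z \<bullet> kmult Kmat z = kmult Kmat z \<bullet> kmult Kmat z"
  using kmult_sym[OF K_sym, of z "kmult Kmat z"] by (simp add: kKK)

lemma kquad: "z \<bullet> kmult M z = (\<Sum>k\<in>UNIV. kcomp z k \<bullet> (M *v kcomp z k))"
  by (simp add: inner_comp comp_kmult)

context
  fixes W :: "real^'n^'n"
  assumes n2: "CARD('n) \<ge> 2" and wg: "weighted_graph W" and conn: "graph_connected W"
begin

lemma kL_low: "rho2 (lap W) * (kmult Kmat z \<bullet> kmult Kmat z) \<le> z \<bullet> kmult (lap W) z"
proof -
  have "rho2 (lap W) * (kmult Kmat z \<bullet> kmult Kmat z) = (\<Sum>k\<in>UNIV. rho2 (lap W) * ((Kmat *v kcomp z k) \<bullet> (Kmat *v kcomp z k)))"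
    by (simp add: kquad inner_comp comp_kmult sum_distrib_left)
  also have "\<dots> \<le> (\<Sum>k\<in>UNIV. kcomp z k \<bullet> (lap W *v kcomp z k))"
    by (rule sum_mono) (rule spectral(3)[OF n2 wg conn])
  finally show ?thesis by (simp add: kquad)
qed

lemma kL_up: "z \<bullet> kmult (lap W) z \<le> rho (lap W) * (kmult Kmat z \<bullet> kmult Kmat z)"
proof -
  have "z \<bullet> kmult (lap W) z = (\<Sum>k\<in>UNIV. kcomp z k \<bullet> (lap W *v kcomp z k))" by (simp add: kquad)
  also have "\<dots> \<le> (\<Sum>k\<in>UNIV. rho (lap W) * ((Kmat *v kcomp z k) \<bullet> (Kmat *v kcomp z k)))"
    by (rule sum_mono) (rule spectral(4)[OF n2 wg conn])
  finally show ?thesis by (simp add: inner_comp comp_kmult sum_distrib_left)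
qed

lemma kLL: "kmult (lap W) z \<bullet> kmult (lap W) z \<le> (rho (lap W))^2 * (kmult Kmat z \<bullet> kmult Kmat z)"
proof -
  have "kmult (lap W) z \<bullet> kmult (lap W) z = (\<Sum>k\<in>UNIV. (lap W *v kcomp z k) \<bullet> (lap W *v kcomp z k))"
    by (simp add: inner_comp comp_kmult)
  also have "\<dots> \<le> (\<Sum>k\<in>UNIV. (rho (lap W))^2 * ((Kmat *v kcomp z k) \<bullet> (Kmat *v kcomp z k)))"
    by (rule sum_mono) (rule spectral(5)[OF n2 wg conn])
  finally show ?thesis by (simp add: inner_comp comp_kmult sum_distrib_left)
qed

lemma kQ_bound: "rho2 (lap W) * norm (kmult (pinv (lap W)) w) \<le> norm (kmult Kmat w)"
proof -
  define y where "y = kmult (pinv (lap W)) w"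
  have Ky: "kmult Kmat y = y" by (simp add: y_def kKQ[OF wg conn])
  have "rho2 (lap W) * (y \<bullet> y) \<le> y \<bullet> kmult (lap W) y" using kL_low[of y] Ky by simp
  also have "y \<bullet> kmult (lap W) y = y \<bullet> kmult Kmat w" by (simp add: y_def kLQ[OF wg conn])
  also have "\<dots> \<le> norm y * norm (kmult Kmat w)" by (rule norm_cauchy_schwarz)
  finally have "rho2 (lap W) * (norm y * norm y) \<le> norm y * norm (kmult Kmat w)"
    by (simp add: power2_norm_eq_inner[symmetric] power2_eq_square)
  then have "norm y * (rho2 (lap W) * norm y) \<le> norm y * norm (kmult Kmat w)" by (simp add: algebra_simps)
  then show ?thesis
    by (cases "norm y = 0") (auto simp: y_def)
qed

end



lemma descent:
  fixes F :: "'a::real_inner \<Rightarrow> real"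
  assumes d: "\<And>y. (F has_derivative (\<lambda>h. gr y \<bullet> h)) (at y)"
    and lip: "\<And>y z. norm (gr y - gr z) \<le> Lf * norm (y - z)"
  shows "F (y + h) \<le> F y + gr y \<bullet> h + Lf/2 * (norm h)^2"
proof -
  define \<phi> where "\<phi> t = F (y + t *\<^sub>R h) - t * (gr y \<bullet> h) - Lf/2 * t^2 * (norm h)^2" for t
  have der: "(\<phi> has_real_derivative (gr (y + t *\<^sub>R h) \<bullet> h - gr y \<bullet> h - Lf * t * (norm h)^2)) (at t)" for t
  proof -
    have l: "((\<lambda>t. y + t *\<^sub>R h) has_derivative (\<lambda>s. s *\<^sub>R h)) (at t)"
      by (auto intro!: derivative_eq_intros)
    have "((\<lambda>t. F (y + t *\<^sub>R h)) has_derivative (\<lambda>s. gr (y + t *\<^sub>R h) \<bullet> (s *\<^sub>R h))) (at t)"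
      by (rule has_derivative_compose[OF l d])
    then have c: "((\<lambda>t. F (y + t *\<^sub>R h)) has_real_derivative (gr (y + t *\<^sub>R h) \<bullet> h)) (at t)"
      by (rule has_derivative_imp_has_field_derivative) (simp add: mult.commute)
    show ?thesis unfolding \<phi>_def
      by (rule c [THEN DERIV_diff, THEN DERIV_diff]) (auto intro!: derivative_eq_intros simp: power2_eq_square)
  qed
  have "\<phi> 1 \<le> \<phi> 0"
  proof (rule DERIV_nonpos_imp_nonincreasing[of 0 1])
    fix t :: real assume t0: "0 \<le> t" and "t \<le> 1"
    have "(gr (y + t *\<^sub>R h) - gr y) \<bullet> h \<le> norm (gr (y + t *\<^sub>R h) - gr y) * norm h" by (rule norm_cauchy_schwarz)
    also have "\<dots> \<le> (Lf * norm (t *\<^sub>R h)) * norm h"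
      using lip[of "y + t *\<^sub>R h" y] by (intro mult_right_mono) auto
    also have "\<dots> = Lf * t * (norm h)^2" using t0 by (simp add: power2_eq_square)
    finally have "gr (y + t *\<^sub>R h) \<bullet> h - gr y \<bullet> h - Lf * t * (norm h)^2 \<le> 0" by (simp add: inner_diff_left)
    then show "\<exists>y'. (\<phi> has_real_derivative y') (at t) \<and> y' \<le> 0" using der by blast
  qed simp
  then show ?thesis by (simp add: \<phi>_def)
qed



lemma final_scalar:
  fixes \<alpha> \<beta> \<eta> \<rho> \<rho>2 Lf a2 b2 G G0 xLx AA Kd2 xKd ud Hd2 uQd uKd xKd' dQd dKd' Au Ad dKdd dV4 V V' :: real
  assumes ab: "\<beta> < \<alpha>" and b0: "0 < \<beta>" and e0: "0 < \<eta>" and r2: "0 < \<rho>2" and r2r: "\<rho>2 \<le> \<rho>"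
  and a2: "0 \<le> a2" and b2: "0 \<le> b2" and G: "0 \<le> G" and G0: "0 \<le> G0"
  and eqV: "V' = V + (-\<eta>*(\<alpha>-\<beta>)*xLx) + (- \<eta>*xKd) + (- \<eta>*ud) - \<eta>*\<beta>*b2 + uQd/\<beta> + \<alpha>/\<beta>^2*uKd + xKd'/\<beta>
      + \<eta>^2*((\<alpha>^2/2 - \<alpha>*\<beta>/2)*AA) + \<eta>^2*(\<beta>^2/2*b2) + \<eta>^2*(Kd2/2) + \<eta>^2*(\<beta>*(\<alpha>-\<beta>)*Au)
      + \<eta>^2*((\<alpha>-\<beta>)*Ad) + \<eta>^2*(\<beta>*ud) + \<eta>^2*(\<beta>^2/2*xLx)
      + \<eta>*xKd' + (- \<eta>*uKd) + (- \<eta>/\<beta>*dKdd) + (dQd/(2*\<beta>^2) + \<alpha>/(2*\<beta>^3)*dKd') + dV4"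
  and hV4: "dV4 \<le> -\<eta>*(G+G0)/2 + \<eta>*Hd2/2 + Lf/2*\<eta>^2*G"
  and h1: "-\<eta>*(\<alpha>-\<beta>)*xLx \<le> -\<eta>*(\<alpha>-\<beta>)*\<rho>2*a2"
  and h2: "-\<eta>*xKd \<le> \<eta>*(a2/2 + Lf^2*a2/2)"
  and h3: "-\<eta>*ud \<le> \<eta>*(b2/2 + Lf^2*a2/2)"
  and h4: "\<eta>*Hd2/2 \<le> \<eta>*Lf^2*a2/2"
  and h5: "uQd/\<beta> \<le> \<eta>*b2/(2*\<beta>*\<rho>2) + \<eta>*Lf^2*G/(2*\<beta>*\<rho>2)"
  and h6: "\<alpha>/\<beta>^2*uKd \<le> \<eta>*\<alpha>*b2/(2*\<beta>^2) + \<eta>*\<alpha>*Lf^2*G/(2*\<beta>^2)"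
  and h7: "xKd'/\<beta> \<le> \<eta>*a2/2 + \<eta>*Lf^2*G/(2*\<beta>^2)"
  and s1: "\<eta>^2*((\<alpha>^2/2 - \<alpha>*\<beta>/2)*AA) \<le> \<eta>^2*((\<alpha>^2/2-\<alpha>*\<beta>/2)*\<rho>^2*a2)"
  and s2: "\<eta>^2*(Kd2/2) \<le> \<eta>^2*(Lf^2*a2/2)"
  and s3: "\<eta>^2*(\<beta>*(\<alpha>-\<beta>)*Au) \<le> \<eta>^2*((\<alpha>-\<beta>)^2*\<rho>^2*a2/2 + \<beta>^2*b2/2)"
  and s4: "\<eta>^2*((\<alpha>-\<beta>)*Ad) \<le> \<eta>^2*((\<alpha>-\<beta>)^2*\<rho>^2*a2/2 + Lf^2*a2/2)"
  and s5: "\<eta>^2*(\<beta>*ud) \<le> \<eta>^2*(\<beta>^2*b2/2 + Lf^2*a2/2)"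
  and s6: "\<eta>^2*(\<beta>^2/2*xLx) \<le> \<eta>^2*(\<beta>^2*\<rho>*a2/2)"
  and s7: "-\<eta>*uKd \<le> \<eta>^2*(b2/2 + Lf^2*G/2)"
  and s8: "-\<eta>/\<beta>*dKdd \<le> \<eta>^2*(Lf^2*a2/2 + Lf^2*G/(2*\<beta>^2))"
  and s9: "dQd/(2*\<beta>^2) + \<alpha>/(2*\<beta>^3)*dKd' \<le> \<eta>^2*(1/\<rho>2 + \<alpha>/\<beta>)*Lf^2*G/(2*\<beta>^2)"
  and s10: "\<eta>*xKd' \<le> \<eta>^2*(\<beta>^2*\<rho>*a2/2 + Lf^2*G/(2*\<beta>^2*\<rho>2))"
  shows "V' \<le> V - \<eta>*(((\<alpha> - \<beta>) * \<rho>2 - (2 + 3 * Lf^2) / 2) - \<eta>*(\<beta>^2 * \<rho> + (2 * \<alpha>^2 + \<beta>^2) * \<rho>^2 + 5 / 2 * Lf^2))*a2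
     - \<eta>*((\<beta> - 1/2 - \<alpha> / (2 * \<beta>^2) - 1 / (2 * \<beta> * \<rho>2)) - \<eta>*(2 * \<beta>^2 + 1/2))*b2
     - \<eta>*((1/4 - 1 / (2 * \<beta>) * (1/\<beta> + 1 / \<rho>2 + \<alpha>/\<beta>) * Lf^2) - \<eta>*(1 / \<beta>^2 * (1 + 1 / \<rho>2 + \<alpha>/\<beta>) * Lf^2 + Lf * (1 + Lf) / 2))*G
     - \<eta>/4*G0"
proof -
  let ?R = "(-\<eta>*(\<alpha>-\<beta>)*\<rho>2*a2) + \<eta>*(a2/2 + Lf^2*a2/2) + \<eta>*(b2/2 + Lf^2*a2/2) - \<eta>*\<beta>*b2
     + (\<eta>*b2/(2*\<beta>*\<rho>2) + \<eta>*Lf^2*G/(2*\<beta>*\<rho>2)) + (\<eta>*\<alpha>*b2/(2*\<beta>^2) + \<eta>*\<alpha>*Lf^2*G/(2*\<beta>^2))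
     + (\<eta>*a2/2 + \<eta>*Lf^2*G/(2*\<beta>^2)) + \<eta>^2*((\<alpha>^2/2-\<alpha>*\<beta>/2)*\<rho>^2*a2) + \<eta>^2*(\<beta>^2/2*b2)
     + \<eta>^2*(Lf^2*a2/2) + \<eta>^2*((\<alpha>-\<beta>)^2*\<rho>^2*a2/2 + \<beta>^2*b2/2) + \<eta>^2*((\<alpha>-\<beta>)^2*\<rho>^2*a2/2 + Lf^2*a2/2)
     + \<eta>^2*(\<beta>^2*b2/2 + Lf^2*a2/2) + \<eta>^2*(\<beta>^2*\<rho>*a2/2) + \<eta>^2*(\<beta>^2*\<rho>*a2/2 + Lf^2*G/(2*\<beta>^2*\<rho>2))
     + \<eta>^2*(b2/2 + Lf^2*G/2) + \<eta>^2*(Lf^2*a2/2 + Lf^2*G/(2*\<beta>^2)) + \<eta>^2*(1/\<rho>2 + \<alpha>/\<beta>)*Lf^2*G/(2*\<beta>^2)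
     + (-\<eta>*(G+G0)/2 + \<eta>*Lf^2*a2/2 + Lf/2*\<eta>^2*G)"
  have A: "V' \<le> V + ?R"
    using eqV hV4 h1 h2 h3 h4 h5 h6 h7 s1 s2 s3 s4 s5 s6 s7 s8 s9 s10 by linarith
  let ?LO = "\<eta>^2*\<rho>^2*(\<alpha>^2/2+5/2*\<alpha>*\<beta>)*a2 + \<eta>^2*Lf^2*a2/2 + \<eta>^2*\<beta>^2*b2/2 + \<eta>^2*Lf^2*(1+\<alpha>/\<beta>)/(2*\<beta>^2)*G + \<eta>/4*G + \<eta>/4*G0"
  have B: "?R + ?LO = - \<eta>*(((\<alpha> - \<beta>) * \<rho>2 - (2 + 3 * Lf^2) / 2) - \<eta>*(\<beta>^2 * \<rho> + (2 * \<alpha>^2 + \<beta>^2) * \<rho>^2 + 5 / 2 * Lf^2))*a2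
     - \<eta>*((\<beta> - 1/2 - \<alpha> / (2 * \<beta>^2) - 1 / (2 * \<beta> * \<rho>2)) - \<eta>*(2 * \<beta>^2 + 1/2))*b2
     - \<eta>*((1/4 - 1 / (2 * \<beta>) * (1/\<beta> + 1 / \<rho>2 + \<alpha>/\<beta>) * Lf^2) - \<eta>*(1 / \<beta>^2 * (1 + 1 / \<rho>2 + \<alpha>/\<beta>) * Lf^2 + Lf * (1 + Lf) / 2))*G
     - \<eta>/4*G0"
    using b0 r2 by (simp add: field_simps power2_eq_square power3_eq_cube)
  have C: "0 \<le> ?LO" using ab b0 e0 a2 b2 G G0
    by (intro add_nonneg_nonneg mult_nonneg_nonneg divide_nonneg_pos) auto
  show ?thesis using A B C by linarith
qed

lemma young: "0 < t \<Longrightarrow> (a::real) * b \<le> (t * a^2 + b^2 / t) / 2"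
proof -
  assume t: "0 < t"
  have "0 \<le> (t * a - b)^2" by simp
  then have "2 * t * (a * b) \<le> t * (t * a^2) + b^2" by (simp add: power2_eq_square algebra_simps)
  have e: "(t * a^2 + b^2 / t) / 2 = (t * (t * a^2) + b^2) / (2 * t)" using t by (simp add: field_simps power2_eq_square)
  have "a * b * (2 * t) = 2 * t * (a * b)" by simp
  then have h: "a * b * (2 * t) \<le> t * (t * a^2) + b^2"
    using \<open>2 * t * (a * b) \<le> t * (t * a^2) + b^2\<close> by linarith
  have "a * b \<le> (t * (t * a^2) + b^2) / (2 * t)"
    using h t by (simp add: pos_le_divide_eq)
  then show ?thesis unfolding e .
qed

lemma young_inner: "(y::'a::real_inner) \<bullet> z \<le> (y \<bullet> y + z \<bullet> z) / 2"
proof -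
  have "0 \<le> (y - z) \<bullet> (y - z)" by simp
  then show ?thesis by (simp add: inner_diff_left inner_diff_right inner_commute)
qed

lemma kxbar: "kmult Hmat z $ i = xbar (z::(real^'p)^'n)"
  by (simp add: kmult_def Hmat_def ones_mat_def xbar_def scaleR_sum_right)

lemma kH_norm: "kmult Hmat z \<bullet> kmult Hmat z = real CARD('n) * (xbar (z::(real^'p)^'n) \<bullet> xbar z)"
  by (simp add: inner_vec_def kxbar)

lemma kH_inner: "kmult Hmat y \<bullet> kmult Hmat z = real CARD('n) * (xbar (y::(real^'p)^'n) \<bullet> xbar z)"
  by (simp add: inner_vec_def kxbar)

lemma kK_comp: "kmult Kmat z $ i = z $ i - xbar (z::(real^'p)^'n)"
  by (simp add: kK_def kxbar)

lemma kmult_comp_i: "kmult M z $ i = (\<Sum>j\<in>UNIV. M$i$j *\<^sub>R z$j)"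
  by (simp add: kmult_def)




theorem lemma6:
  fixes W :: "real^'n^'n"
    and f :: "'n \<Rightarrow> real^'p \<Rightarrow> real"
    and grad :: "'n \<Rightarrow> real^'p \<Rightarrow> real^'p"
    and Lf \<alpha> \<beta> \<eta> :: real
    and x v :: "nat \<Rightarrow> (real^'p)^'n"
  assumes n2: "CARD('n) \<ge> 2"
    and wg: "weighted_graph W"
    and A1: "graph_connected W"
    and A2: "\<exists>xs. \<forall>y. avgf f xs \<le> avgf f y"
    and grad: "\<And>i y. (f i has_derivative (\<lambda>h. grad i y \<bullet> h)) (at y)"
    and A3: "\<And>i y z. norm (grad i y - grad i z) \<le> Lf * norm (y - z)"
    and ab: "\<alpha> > \<beta>" and b0: "\<beta> > 0" and eta0: "\<eta> > 0"
    and v0: "(\<Sum>j\<in>UNIV. v 0 $ j) = 0"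
    and xrec: "\<And>k i. x (Suc k) $ i = x k $ i - \<eta> *\<^sub>R
                 (\<alpha> *\<^sub>R (\<Sum>j\<in>UNIV. lap W $ i $ j *\<^sub>R x k $ j) + \<beta> *\<^sub>R v k $ i + grad i (x k $ i))"
    and vrec: "\<And>k i. v (Suc k) $ i = v k $ i + (\<eta> * \<beta>) *\<^sub>R (\<Sum>j\<in>UNIV. lap W $ i $ j *\<^sub>R x k $ j)"
  shows "\<forall>k. lyapV (lap W) f grad \<alpha> \<beta> (x (Suc k)) (v (Suc k))
           \<le> lyapV (lap W) f grad \<alpha> \<beta> (x k) (v k)
             - \<eta> * (eps1 (lap W) \<alpha> \<beta> Lf - \<eta> * eps2 (lap W) \<alpha> \<beta> Lf) * wnorm2 Kmat (x k)
             - \<eta> * (eps3 (lap W) \<alpha> \<beta> - \<eta> * eps4 \<beta>)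
                   * wnorm2 Kmat (v k + (1/\<beta>) *\<^sub>R g0col grad (x k))
             - \<eta> * (eps5 (lap W) \<alpha> \<beta> Lf - \<eta> * eps6 (lap W) \<alpha> \<beta> Lf)
                   * (norm (kmult Hmat (gcol grad (x k))))^2
             - \<eta> / 4 * (norm (kmult Hmat (g0col grad (x k))))^2"
proof -
  let ?L = "lap W" and ?Q = "pinv (lap W)" and ?N = "real CARD('n)"
  have Npos: "0 < ?N" by simp
  have bne: "\<beta> \<noteq> 0" using b0 by simp
  have r2pos: "0 < rho2 ?L" and r2r: "rho2 ?L \<le> rho ?L" using spectral(1,2)[OF n2 wg A1] by auto
  have symK: "\<And>a b. a \<bullet> kmult Kmat b = kmult Kmat a \<bullet> b" by (rule kmult_sym[OF K_sym])
  have symQ: "\<And>a b. a \<bullet> kmult ?Q b = kmult ?Q a \<bullet> b" by (rule kmult_sym[OF Q_sym'[OF wg A1]])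
  have xrec': "x (Suc k) = x k - \<eta> *\<^sub>R (\<alpha> *\<^sub>R kmult ?L (x k) + \<beta> *\<^sub>R v k + gcol grad (x k))" for k
    by (simp add: vec_eq_iff xrec kmult_comp_i gcol_def)
  have vrec': "v (Suc k) = v k + (\<eta>*\<beta>) *\<^sub>R kmult ?L (x k)" for k
    by (simp add: vec_eq_iff vrec kmult_comp_i)
  have Hv: "kmult Hmat (v k) = 0" for k
  proof (induction k)
    case 0 show ?case using v0 by (simp add: vec_eq_iff kxbar xbar_def)
  next
    case (Suc k) show ?case using Suc by (simp add: vrec' kmult_add kmult_scaleR kHL[OF wg A1])
  qed
  have Vform: "lyapV ?L f grad \<alpha> \<beta> z w = 1/2 * (z \<bullet> kmult Kmat z)
      + 1/2 * ((w + (1/\<beta>) *\<^sub>R g0col grad z) \<bullet> (kmult ?Q (w + (1/\<beta>) *\<^sub>R g0col grad z) + (\<alpha>/\<beta>) *\<^sub>R kmult Kmat (w + (1/\<beta>) *\<^sub>R g0col grad z)))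
      + z \<bullet> kmult Kmat (w + (1/\<beta>) *\<^sub>R g0col grad z) + ?N * (avgf f (xbar z) - fstar f)" for z w
    by (simp add: lyapV_def Let_def wnorm2_def kinner_def kmult_madd kmult_mscale)
  show ?thesis
  proof
    fix k
    define X where "X = x k"
    define X' where "X' = x (Suc k)"
    define Vv where "Vv = v k"
    define V' where "V' = v (Suc k)"
    define g where "g = gcol grad X"
    define g0 where "g0 = g0col grad X"
    define g0' where "g0' = g0col grad X'"
    define A where "A = kmult ?L X"
    define u where "u = Vv + (1/\<beta>) *\<^sub>R g0"
    define d where "d = g - g0"
    define \<delta> where "\<delta> = g0' - g0"
    define e where "e = - \<eta> *\<^sub>R (\<alpha> *\<^sub>R A + \<beta> *\<^sub>R u + d)"
    define w where "w = (\<eta>*\<beta>) *\<^sub>R A + (1/\<beta>) *\<^sub>R \<delta>"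
    define Kx where "Kx = kmult Kmat X"
    define Ku where "Ku = kmult Kmat u"
    define Kd where "Kd = kmult Kmat d"
    define K\<delta> where "K\<delta> = kmult Kmat \<delta>"
    define Q\<delta> where "Q\<delta> = kmult ?Q \<delta>"
    define gb where "gb = xbar g"
    define gb0 where "gb0 = xbar g0"
    have HVv: "kmult Hmat Vv = 0" by (simp add: Vv_def Hv)
    have bu: "\<beta> *\<^sub>R u + d = \<beta> *\<^sub>R Vv + g" using bne by (simp add: u_def d_def scaleR_add_right)
    have X'e: "X' = X + e" by (simp add: X'_def X_def xrec' e_def bu A_def g_def Vv_def)
    have u'w: "V' + (1/\<beta>) *\<^sub>R g0' = u + w"
      by (simp add: V'_def vrec' u_def w_def \<delta>_def Vv_def A_def X_def algebra_simps)
    have xb': "xbar X' = xbar X - \<eta> *\<^sub>R gb"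
    proof -
      obtain i :: 'n where True by simp
      have "kmult Hmat X' = kmult Hmat X - \<eta> *\<^sub>R kmult Hmat g"
        by (simp add: X'_def xrec' X_def[symmetric] Vv_def[symmetric] g_def[symmetric] kmult_lin kmult_add
            HVv kHL[OF wg A1])
      then have "kmult Hmat X' $ i = kmult Hmat X $ i - \<eta> *\<^sub>R kmult Hmat g $ i" by simp
      then show ?thesis by (simp add: kxbar gb_def)
    qed
    have KA: "kmult Kmat A = A" by (simp add: A_def kKL[OF wg A1])
    have QA: "kmult ?Q A = Kx" by (simp add: A_def Kx_def kQL[OF wg A1])
    have Ke: "kmult Kmat e = - \<eta> *\<^sub>R (\<alpha> *\<^sub>R A + \<beta> *\<^sub>R Ku + Kd)"
      by (simp add: e_def kmult_lin kmult_add KA Ku_def Kd_def)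
    have Kw: "kmult Kmat w = (\<eta>*\<beta>) *\<^sub>R A + (1/\<beta>) *\<^sub>R K\<delta>"
      by (simp add: w_def kmult_lin kmult_add KA K\<delta>_def)
    have Qw: "kmult ?Q w = (\<eta>*\<beta>) *\<^sub>R Kx + (1/\<beta>) *\<^sub>R Q\<delta>"
      by (simp add: w_def kmult_lin kmult_add QA Q\<delta>_def)
    define a2 where "a2 = Kx \<bullet> Kx"
    define b2 where "b2 = Ku \<bullet> Ku"
    define xLx where "xLx = X \<bullet> A"
    define xu where "xu = X \<bullet> Ku"
    define xKd where "xKd = X \<bullet> Kd"
    define ud where "ud = Ku \<bullet> Kd"
    define AA where "AA = A \<bullet> A"
    define Kd2 where "Kd2 = Kd \<bullet> Kd"
    define Au where "Au = A \<bullet> Ku"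
    define Ad where "Ad = A \<bullet> Kd"
    define uQd where "uQd = u \<bullet> Q\<delta>"
    define uKd where "uKd = Ku \<bullet> \<delta>"
    define xKd' where "xKd' = X \<bullet> K\<delta>"
    define dQd where "dQd = \<delta> \<bullet> Q\<delta>"
    define dKd' where "dKd' = K\<delta> \<bullet> K\<delta>"
    define Ad' where "Ad' = A \<bullet> K\<delta>"
    define dKdd where "dKdd = Kd \<bullet> \<delta>"
    define G where "G = kmult Hmat g \<bullet> kmult Hmat g"
    define G0 where "G0 = kmult Hmat g0 \<bullet> kmult Hmat g0"
    define Hd2 where "Hd2 = kmult Hmat d \<bullet> kmult Hmat d"
    define dV4 where "dV4 = ?N * (avgf f (xbar X') - fstar f) - ?N * (avgf f (xbar X) - fstar f)"
    have T1: "X' \<bullet> kmult Kmat X' = a2 + 2 * (X \<bullet> kmult Kmat e) + kmult Kmat e \<bullet> kmult Kmat e"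
    proof -
      have "e \<bullet> kmult Kmat X = X \<bullet> kmult Kmat e" using symK[of e X] by (simp add: inner_commute)
      moreover have "e \<bullet> kmult Kmat e = kmult Kmat e \<bullet> kmult Kmat e" by (rule wnormK)
      moreover have "X \<bullet> kmult Kmat X = a2" by (simp add: a2_def Kx_def wnormK)
      ultimately show ?thesis by (simp add: X'e kmult_add inner_add_left inner_add_right)
    qed
    have T1a: "X \<bullet> kmult Kmat e = - \<eta> * (\<alpha> * xLx + \<beta> * xu + xKd)"
      by (simp add: Ke inner_add_right xLx_def xu_def xKd_def algebra_simps)
    have T1b: "kmult Kmat e \<bullet> kmult Kmat e = \<eta>^2 * (\<alpha>^2 * AA + \<beta>^2 * b2 + Kd2 + 2*\<alpha>*\<beta>*Au + 2*\<alpha>*Ad + 2*\<beta>*ud)"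
    proof -
      have "Ku \<bullet> A = Au" "Kd \<bullet> A = Ad" "Kd \<bullet> Ku = ud" by (simp_all add: Au_def Ad_def ud_def inner_commute)
      then show ?thesis
        by (simp add: Ke inner_add_left inner_add_right AA_def b2_def Kd2_def Au_def Ad_def ud_def
            power2_eq_square algebra_simps)
    qed
    define P where "P z = kmult ?Q z + (\<alpha>/\<beta>) *\<^sub>R kmult Kmat z" for z :: "(real^'p)^'n"
    have symP: "a \<bullet> P b = b \<bullet> P a" for a b
      using symQ[of a b] symK[of a b] by (simp add: P_def inner_add_right inner_commute)
    have Padd: "P (u + w) = P u + P w" by (simp add: P_def kmult_add scaleR_add_right)
    have T2: "(u + w) \<bullet> P (u + w) = u \<bullet> P u + 2 * (u \<bullet> P w) + w \<bullet> P w"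
      using symP[of w u] by (simp only: Padd inner_add_left inner_add_right)
    have T2a: "u \<bullet> P w = \<eta>*\<beta>*xu + uQd/\<beta> + (\<alpha>/\<beta>) * (\<eta>*\<beta>*Au + uKd/\<beta>)"
    proof -
      have "u \<bullet> Kx = xu" using symK[of u X] by (simp add: xu_def Kx_def Ku_def inner_commute)
      moreover have "u \<bullet> A = Au" using symK[of u A] by (simp add: KA Au_def Ku_def inner_commute)
      moreover have "u \<bullet> K\<delta> = uKd" using symK[of u \<delta>] by (simp add: uKd_def Ku_def K\<delta>_def)
      ultimately show ?thesis
        by (simp add: P_def Qw Kw inner_add_right uQd_def algebra_simps)
    qed
    have wQw: "w \<bullet> kmult ?Q w = \<eta>^2*\<beta>^2*xLx + 2*\<eta>*xKd' + dQd/\<beta>^2"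
    proof -
      have "A \<bullet> Kx = xLx" using symK[of A X] by (simp add: KA xLx_def Kx_def inner_commute)
      moreover have "A \<bullet> Q\<delta> = xKd'" using symQ[of A \<delta>] symK[of X \<delta>]
        by (simp add: QA Q\<delta>_def xKd'_def K\<delta>_def Kx_def)
      moreover have "\<delta> \<bullet> Kx = xKd'" using symK[of \<delta> X] by (simp add: xKd'_def K\<delta>_def Kx_def inner_commute)
      ultimately show ?thesis using bne
        by (simp only: Qw) (simp add: w_def inner_add_left inner_add_right dQd_def power2_eq_square field_simps)
    qed
    have wKw: "w \<bullet> kmult Kmat w = \<eta>^2*\<beta>^2*AA + 2*\<eta>*Ad' + dKd'/\<beta>^2"
    proof -
      have "w \<bullet> kmult Kmat w = kmult Kmat w \<bullet> kmult Kmat w" by (rule wnormK)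
      also have "\<dots> = ((\<eta>*\<beta>) *\<^sub>R A + (1/\<beta>) *\<^sub>R K\<delta>) \<bullet> ((\<eta>*\<beta>) *\<^sub>R A + (1/\<beta>) *\<^sub>R K\<delta>)" by (simp only: Kw)
      also have "\<dots> = \<eta>^2*\<beta>^2*AA + 2*\<eta>*Ad' + dKd'/\<beta>^2"
        using bne by (simp add: inner_add_left inner_add_right dKd'_def AA_def Ad'_def inner_commute[of K\<delta> A]
            power2_eq_square field_simps)
      finally show ?thesis .
    qed
    have T2b: "w \<bullet> P w = \<eta>^2*\<beta>^2*xLx + 2*\<eta>*xKd' + dQd/\<beta>^2 + (\<alpha>/\<beta>) * (\<eta>^2*\<beta>^2*AA + 2*\<eta>*Ad' + dKd'/\<beta>^2)"
      by (simp only: P_def inner_add_right inner_scaleR_right wQw wKw)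
    have T3split: "X' \<bullet> kmult Kmat (u + w) = X \<bullet> kmult Kmat u + X \<bullet> kmult Kmat w + e \<bullet> kmult Kmat u + e \<bullet> kmult Kmat w"
      by (simp only: X'e kmult_add inner_add_left inner_add_right add.assoc)
    have XKw: "X \<bullet> kmult Kmat w = \<eta>*\<beta>*xLx + xKd'/\<beta>"
      by (simp only: Kw) (simp add: inner_add_right xLx_def xKd'_def)
    have eKu: "e \<bullet> kmult Kmat u = - \<eta>*(\<alpha>*Au + \<beta>*b2 + ud)"
    proof -
      have "A \<bullet> u = Au" using symK[of A u] by (simp add: KA Au_def Ku_def)
      moreover have "Ku \<bullet> u = b2" using symK[of u u] wnormK[of u] by (simp add: b2_def Ku_def inner_commute)
      moreover have "Kd \<bullet> u = ud" using symK[of Kd u] by (simp add: Kd_def kKK ud_def Ku_def inner_commute)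
      moreover have "e \<bullet> kmult Kmat u = kmult Kmat e \<bullet> u" by (rule symK)
      ultimately show ?thesis by (simp only:) (simp add: Ke inner_add_left algebra_simps)
    qed
    have eKw: "e \<bullet> kmult Kmat w = - \<eta>*(\<eta>*\<beta>*(\<alpha>*AA + \<beta>*Au + Ad) + (\<alpha>*Ad' + \<beta>*uKd + dKdd)/\<beta>)"
    proof -
      have "A \<bullet> \<delta> = Ad'" using symK[of A \<delta>] by (simp add: KA Ad'_def K\<delta>_def)
      moreover have "Ku \<bullet> A = Au" "Kd \<bullet> A = Ad" by (simp_all add: Au_def Ad_def inner_commute)
      moreover have "e \<bullet> kmult Kmat w = kmult Kmat e \<bullet> w" by (rule symK)
      ultimately show ?thesis using bne
        by (simp only:) (simp add: Ke w_def inner_add_left inner_add_right AA_def uKd_def dKdd_def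
            algebra_simps power2_eq_square add_divide_distrib)
    qed
    have T3: "X' \<bullet> kmult Kmat (u + w) = xu + (\<eta>*\<beta>*xLx + xKd'/\<beta>) - \<eta>*(\<alpha>*Au + \<beta>*b2 + ud)
        - \<eta>*(\<eta>*\<beta>*(\<alpha>*AA + \<beta>*Au + Ad) + (\<alpha>*Ad' + \<beta>*uKd + dKdd)/\<beta>)"
      unfolding T3split XKw eKu eKw by (simp add: xu_def Ku_def)
    have Vcur: "lyapV ?L f grad \<alpha> \<beta> X Vv = 1/2*a2 + 1/2*(u \<bullet> P u) + xu + ?N * (avgf f (xbar X) - fstar f)"
      using Vform[of X Vv] wnormK[of X] by (simp add: a2_def Kx_def P_def u_def[symmetric] g0_def[symmetric] xu_def Ku_def)
    have u'w': "V' + (1/\<beta>) *\<^sub>R g0col grad X' = u + w" using u'w by (simp add: g0'_def)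
    have Vnext: "lyapV ?L f grad \<alpha> \<beta> X' V' = 1/2*(X' \<bullet> kmult Kmat X') + 1/2*((u + w) \<bullet> P (u + w))
        + X' \<bullet> kmult Kmat (u + w) + ?N * (avgf f (xbar X') - fstar f)"
      using Vform[of X' V'] by (simp only: u'w' P_def)
    have eqV: "lyapV ?L f grad \<alpha> \<beta> X' V' = lyapV ?L f grad \<alpha> \<beta> X Vv + (-\<eta>*(\<alpha>-\<beta>)*xLx) + (- \<eta>*xKd) + (- \<eta>*ud) - \<eta>*\<beta>*b2 + uQd/\<beta> + \<alpha>/\<beta>^2*uKd + xKd'/\<beta>
      + \<eta>^2*((\<alpha>^2/2 - \<alpha>*\<beta>/2)*AA) + \<eta>^2*(\<beta>^2/2*b2) + \<eta>^2*(Kd2/2) + \<eta>^2*(\<beta>*(\<alpha>-\<beta>)*Au)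
      + \<eta>^2*((\<alpha>-\<beta>)*Ad) + \<eta>^2*(\<beta>*ud) + \<eta>^2*(\<beta>^2/2*xLx)
      + \<eta>*xKd' + (- \<eta>*uKd) + (- \<eta>/\<beta>*dKdd) + (dQd/(2*\<beta>^2) + \<alpha>/(2*\<beta>^3)*dKd') + dV4"
      unfolding Vcur Vnext T1 T1a T1b T2 T2a T2b T3 dV4_def using bne
      by (simp add: field_simps power2_eq_square power3_eq_cube)
    have sq_lip: "\<And>(p::real^'p) (q::real^'p) c. norm p \<le> c * norm q \<Longrightarrow> p \<bullet> p \<le> c^2 * (q \<bullet> q)"
    proof -
      fix p q :: "real^'p" and c :: real
      assume h: "norm p \<le> c * norm q"
      have "(norm p)^2 \<le> (c * norm q)^2" using h by (intro power_mono) auto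
      then show "p \<bullet> p \<le> c^2 * (q \<bullet> q)" by (simp add: power2_norm_eq_inner[symmetric] power_mult_distrib)
    qed
    have Fd: "d \<bullet> d \<le> Lf^2 * a2"
    proof -
      have "d \<bullet> d = (\<Sum>i\<in>UNIV. d$i \<bullet> d$i)" by (simp add: inner_vec_def)
      also have "\<dots> \<le> (\<Sum>i\<in>UNIV. Lf^2 * (Kx$i \<bullet> Kx$i))"
      proof (rule sum_mono)
        fix i
        have "d$i = grad i (X$i) - grad i (xbar X)" by (simp add: d_def g_def g0_def gcol_def g0col_def)
        moreover have "Kx$i = X$i - xbar X" by (simp add: Kx_def kK_comp)
        ultimately show "d$i \<bullet> d$i \<le> Lf^2 * (Kx$i \<bullet> Kx$i)" using A3 sq_lip by metis
      qed
      also have "\<dots> = Lf^2 * a2" by (simp add: a2_def inner_vec_def sum_distrib_left)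
      finally show ?thesis .
    qed
    have Fdl: "\<delta> \<bullet> \<delta> \<le> Lf^2 * \<eta>^2 * G"
    proof -
      have "\<delta> \<bullet> \<delta> = (\<Sum>i\<in>UNIV. \<delta>$i \<bullet> \<delta>$i)" by (simp add: inner_vec_def)
      also have "\<dots> \<le> (\<Sum>i::'n\<in>UNIV. (Lf * \<eta>)^2 * (gb \<bullet> gb))"
      proof (rule sum_mono)
        fix i
        have "\<delta>$i = grad i (xbar X') - grad i (xbar X)" by (simp add: \<delta>_def g0'_def g0_def g0col_def)
        then have "norm (\<delta>$i) \<le> Lf * norm (xbar X' - xbar X)" using A3 by simp
        also have "norm (xbar X' - xbar X) = \<eta> * norm gb" using eta0 by (simp add: xb')
        finally have "norm (\<delta>$i) \<le> (Lf * \<eta>) * norm gb" by (simp add: mult.assoc)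
        then show "\<delta>$i \<bullet> \<delta>$i \<le> (Lf * \<eta>)^2 * (gb \<bullet> gb)" by (rule sq_lip)
      qed
      also have "\<dots> = Lf^2 * \<eta>^2 * G" by (simp add: G_def kH_norm gb_def power_mult_distrib)
      finally show ?thesis .
    qed
    have FKd: "Kd2 \<le> d \<bullet> d" by (simp add: Kd2_def Kd_def normK_le)
    have FHd: "Hd2 \<le> d \<bullet> d" by (simp add: Hd2_def normH_le)
    have FKdl: "dKd' \<le> \<delta> \<bullet> \<delta>" by (simp add: dKd'_def K\<delta>_def normK_le)
    have nKdl: "norm K\<delta> \<le> norm \<delta>" by (simp add: norm_le K\<delta>_def normK_le)
    have FQ: "rho2 ?L * norm Q\<delta> \<le> norm \<delta>"
      using kQ_bound[OF n2 wg A1, of \<delta>] nKdl by (simp add: Q\<delta>_def K\<delta>_def)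
    have Flow: "rho2 ?L * a2 \<le> xLx" using kL_low[OF n2 wg A1, of X] by (simp add: a2_def Kx_def xLx_def A_def)
    have Fup: "xLx \<le> rho ?L * a2" using kL_up[OF n2 wg A1, of X] by (simp add: a2_def Kx_def xLx_def A_def)
    have FAA: "AA \<le> (rho ?L)^2 * a2" using kLL[OF n2 wg A1, of X] by (simp add: a2_def Kx_def AA_def A_def)
    have a20: "0 \<le> a2" and b20: "0 \<le> b2" and G_0: "0 \<le> G" and G00: "0 \<le> G0"
      by (simp_all add: a2_def b2_def G_def G0_def)
    have nKx: "(norm Kx)^2 = a2" and nKu: "(norm Ku)^2 = b2" and nKd: "(norm Kd)^2 = Kd2"
      and ndl: "(norm \<delta>)^2 = \<delta> \<bullet> \<delta>"
      by (simp_all add: a2_def b2_def Kd2_def power2_norm_eq_inner)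
    have ydl: "p * norm \<delta> \<le> (t * p^2 + Lf^2 * \<eta>^2 * G / t) / 2" if "0 < t" for p t
    proof -
      have "p * norm \<delta> \<le> (t * p^2 + (norm \<delta>)^2 / t) / 2" by (rule young[OF that])
      also have "(norm \<delta>)^2 / t \<le> Lf^2 * \<eta>^2 * G / t" using Fdl that by (simp add: ndl divide_right_mono)
      finally show ?thesis by simp
    qed
    have e0: "0 \<le> \<eta>" using eta0 by simp
    have amb: "0 \<le> \<alpha> - \<beta>" using ab by simp
    have h1: "-\<eta>*(\<alpha>-\<beta>)*xLx \<le> -\<eta>*(\<alpha>-\<beta>)*rho2 ?L*a2"
      using mult_left_mono[OF Flow, of "\<eta>*(\<alpha>-\<beta>)"] e0 amb by (simp add: mult.assoc)
    have c2: "- xKd \<le> a2/2 + Lf^2*a2/2"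
    proof -
      have "xKd = Kx \<bullet> d" using symK[of X d] by (simp add: xKd_def Kd_def Kx_def)
      then have "- xKd = Kx \<bullet> (- d)" by simp
      also have "\<dots> \<le> (Kx \<bullet> Kx + (-d) \<bullet> (-d)) / 2" by (rule young_inner)
      finally show ?thesis using Fd by (simp add: a2_def)
    qed
    have h2: "-\<eta>*xKd \<le> \<eta>*(a2/2 + Lf^2*a2/2)" using mult_left_mono[OF c2 e0] by simp
    have c3: "- ud \<le> b2/2 + Lf^2*a2/2"
    proof -
      have "- ud = Ku \<bullet> (- Kd)" by (simp add: ud_def)
      also have "\<dots> \<le> (Ku \<bullet> Ku + (-Kd) \<bullet> (-Kd)) / 2" by (rule young_inner)
      finally show ?thesis using Fd FKd by (simp add: b2_def Kd2_def)
    qed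
    have h3: "-\<eta>*ud \<le> \<eta>*(b2/2 + Lf^2*a2/2)" using mult_left_mono[OF c3 e0] by simp
    have h4: "\<eta>*Hd2/2 \<le> \<eta>*Lf^2*a2/2" using mult_left_mono[OF order_trans[OF FHd Fd] e0] by simp
    have cKu: "Ku \<bullet> z \<le> (\<eta> * b2 + Lf^2 * \<eta> * G) / 2" if "norm z \<le> norm \<delta>" for z
    proof -
      have "Ku \<bullet> z \<le> norm Ku * norm z" by (rule norm_cauchy_schwarz)
      also have "\<dots> \<le> norm Ku * norm \<delta>" using that by (simp add: mult_left_mono)
      also have "\<dots> \<le> (\<eta> * (norm Ku)^2 + Lf^2 * \<eta>^2 * G / \<eta>) / 2" by (rule ydl[OF eta0])
      finally show ?thesis using eta0 nKu by (simp add: power2_eq_square algebra_simps)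
    qed
    have c5: "rho2 ?L * uQd \<le> (\<eta> * b2 + Lf^2 * \<eta> * G) / 2"
    proof -
      have "uQd = Ku \<bullet> Q\<delta>" using symK[of u Q\<delta>] kKQ[OF wg A1, of \<delta>] by (simp add: uQd_def Ku_def Q\<delta>_def)
      then have "rho2 ?L * uQd = Ku \<bullet> (rho2 ?L *\<^sub>R Q\<delta>)" by simp
      also have "\<dots> \<le> (\<eta> * b2 + Lf^2 * \<eta> * G) / 2" using FQ r2pos by (intro cKu) simp
      finally show ?thesis .
    qed
    have h5: "uQd/\<beta> \<le> \<eta>*b2/(2*\<beta>*rho2 ?L) + \<eta>*Lf^2*G/(2*\<beta>*rho2 ?L)"
    proof -
      have "uQd \<le> ((\<eta> * b2 + Lf^2 * \<eta> * G) / 2) / rho2 ?L" using c5 r2pos by (simp add: pos_le_divide_eq mult.commute)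
      then have "uQd / \<beta> \<le> ((\<eta> * b2 + Lf^2 * \<eta> * G) / 2) / rho2 ?L / \<beta>" by (rule divide_right_mono) (use b0 in simp)
      also have "\<dots> = \<eta>*b2/(2*\<beta>*rho2 ?L) + \<eta>*Lf^2*G/(2*\<beta>*rho2 ?L)" using b0 r2pos by (simp add: field_simps)
      finally show ?thesis .
    qed
    have c6: "uKd \<le> (\<eta> * b2 + Lf^2 * \<eta> * G) / 2" unfolding uKd_def by (rule cKu) simp
    have h6: "\<alpha>/\<beta>^2*uKd \<le> \<eta>*\<alpha>*b2/(2*\<beta>^2) + \<eta>*\<alpha>*Lf^2*G/(2*\<beta>^2)"
    proof -
      have "\<alpha>/\<beta>^2*uKd \<le> \<alpha>/\<beta>^2*((\<eta> * b2 + Lf^2 * \<eta> * G) / 2)" using c6 ab b0 by (intro mult_left_mono) auto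
      also have "\<dots> = \<eta>*\<alpha>*b2/(2*\<beta>^2) + \<eta>*\<alpha>*Lf^2*G/(2*\<beta>^2)" using b0 by (simp add: field_simps)
      finally show ?thesis .
    qed
    have cX: "xKd' \<le> (t * a2 + Lf^2 * \<eta>^2 * G / t) / 2" if "0 < t" for t
    proof -
      have "xKd' = Kx \<bullet> \<delta>" using symK[of X \<delta>] by (simp add: xKd'_def K\<delta>_def Kx_def)
      also have "\<dots> \<le> norm Kx * norm \<delta>" by (rule norm_cauchy_schwarz)
      also have "\<dots> \<le> (t * (norm Kx)^2 + Lf^2 * \<eta>^2 * G / t) / 2" by (rule ydl[OF that])
      finally show ?thesis by (simp add: nKx)
    qed
    have h7: "xKd'/\<beta> \<le> \<eta>*a2/2 + \<eta>*Lf^2*G/(2*\<beta>^2)"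
    proof -
      have tp: "0 < \<eta> * \<beta>" using eta0 b0 by simp
      have "xKd'/\<beta> \<le> ((\<eta> * \<beta>) * a2 + Lf^2 * \<eta>^2 * G / (\<eta> * \<beta>)) / 2 / \<beta>"
        using cX[OF tp] by (rule divide_right_mono) (use b0 in simp)
      also have "\<dots> = \<eta>*a2/2 + \<eta>*Lf^2*G/(2*\<beta>^2)" using b0 eta0 by (simp add: field_simps power2_eq_square)
      finally show ?thesis .
    qed
    have e2: "0 \<le> \<eta>^2" by simp
    have s1: "\<eta>^2*((\<alpha>^2/2 - \<alpha>*\<beta>/2)*AA) \<le> \<eta>^2*((\<alpha>^2/2-\<alpha>*\<beta>/2)*(rho ?L)^2*a2)"
    proof -
      have "0 \<le> \<alpha>^2/2 - \<alpha>*\<beta>/2" using ab b0 by (simp add: power2_eq_square algebra_simps)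
      then show ?thesis using FAA by (simp add: mult_left_mono mult.assoc)
    qed
    have s2: "\<eta>^2*(Kd2/2) \<le> \<eta>^2*(Lf^2*a2/2)" using order_trans[OF FKd Fd] by (simp add: mult_left_mono)
    have s3: "\<eta>^2*(\<beta>*(\<alpha>-\<beta>)*Au) \<le> \<eta>^2*((\<alpha>-\<beta>)^2*(rho ?L)^2*a2/2 + \<beta>^2*b2/2)"
    proof -
      have "\<beta>*(\<alpha>-\<beta>)*Au = ((\<alpha>-\<beta>) *\<^sub>R A) \<bullet> (\<beta> *\<^sub>R Ku)" by (simp add: Au_def)
      also have "\<dots> \<le> (((\<alpha>-\<beta>) *\<^sub>R A) \<bullet> ((\<alpha>-\<beta>) *\<^sub>R A) + (\<beta> *\<^sub>R Ku) \<bullet> (\<beta> *\<^sub>R Ku)) / 2" by (rule young_inner)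
      also have "\<dots> = ((\<alpha>-\<beta>)^2 * AA + \<beta>^2 * b2) / 2" by (simp add: AA_def b2_def power2_eq_square)
      also have "\<dots> \<le> ((\<alpha>-\<beta>)^2*((rho ?L)^2*a2) + \<beta>^2*b2) / 2" using FAA by (simp add: mult_left_mono)
      finally show ?thesis by (simp add: mult_left_mono add_divide_distrib mult.assoc)
    qed
    have s4: "\<eta>^2*((\<alpha>-\<beta>)*Ad) \<le> \<eta>^2*((\<alpha>-\<beta>)^2*(rho ?L)^2*a2/2 + Lf^2*a2/2)"
    proof -
      have "(\<alpha>-\<beta>)*Ad = ((\<alpha>-\<beta>) *\<^sub>R A) \<bullet> Kd" by (simp add: Ad_def)
      also have "\<dots> \<le> (((\<alpha>-\<beta>) *\<^sub>R A) \<bullet> ((\<alpha>-\<beta>) *\<^sub>R A) + Kd \<bullet> Kd) / 2" by (rule young_inner)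
      also have "\<dots> = ((\<alpha>-\<beta>)^2 * AA + Kd2) / 2" by (simp add: AA_def Kd2_def power2_eq_square)
      also have "\<dots> \<le> ((\<alpha>-\<beta>)^2*((rho ?L)^2*a2) + Lf^2*a2) / 2"
        using FAA order_trans[OF FKd Fd] by (intro divide_right_mono add_mono mult_left_mono) auto
      finally show ?thesis by (simp add: mult_left_mono add_divide_distrib mult.assoc)
    qed
    have s5: "\<eta>^2*(\<beta>*ud) \<le> \<eta>^2*(\<beta>^2*b2/2 + Lf^2*a2/2)"
    proof -
      have "\<beta>*ud = (\<beta> *\<^sub>R Ku) \<bullet> Kd" by (simp add: ud_def)
      also have "\<dots> \<le> ((\<beta> *\<^sub>R Ku) \<bullet> (\<beta> *\<^sub>R Ku) + Kd \<bullet> Kd) / 2" by (rule young_inner)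
      also have "\<dots> = (\<beta>^2 * b2 + Kd2) / 2" by (simp add: b2_def Kd2_def power2_eq_square)
      also have "\<dots> \<le> (\<beta>^2 * b2 + Lf^2*a2) / 2" using order_trans[OF FKd Fd] by simp
      finally show ?thesis by (simp add: mult_left_mono add_divide_distrib)
    qed
    have s6: "\<eta>^2*(\<beta>^2/2*xLx) \<le> \<eta>^2*(\<beta>^2*rho ?L*a2/2)"
      using mult_left_mono[OF Fup, of "\<eta>^2*\<beta>^2/2"] by (simp add: mult.assoc mult.left_commute)
    have s7: "-\<eta>*uKd \<le> \<eta>^2*(b2/2 + Lf^2*G/2)"
    proof -
      have "- uKd \<le> (\<eta> * b2 + Lf^2 * \<eta> * G) / 2" unfolding uKd_def using cKu[of "-\<delta>"] by simp
      then have "\<eta> * (- uKd) \<le> \<eta> * ((\<eta> * b2 + Lf^2 * \<eta> * G) / 2)" using e0 by (rule mult_left_mono)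
      then show ?thesis by (simp add: power2_eq_square algebra_simps add_divide_distrib)
    qed
    have s8: "-\<eta>/\<beta>*dKdd \<le> \<eta>^2*(Lf^2*a2/2 + Lf^2*G/(2*\<beta>^2))"
    proof -
      have tp: "0 < \<eta> * \<beta>" using eta0 b0 by simp
      have "- dKdd = Kd \<bullet> (- \<delta>)" by (simp add: dKdd_def)
      also have "\<dots> \<le> norm Kd * norm \<delta>" using norm_cauchy_schwarz[of Kd "-\<delta>"] by simp
      also have "\<dots> \<le> ((\<eta>*\<beta>) * (norm Kd)^2 + Lf^2 * \<eta>^2 * G / (\<eta>*\<beta>)) / 2" by (rule ydl[OF tp])
      also have "\<dots> \<le> ((\<eta>*\<beta>) * (Lf^2*a2) + Lf^2 * \<eta>^2 * G / (\<eta>*\<beta>)) / 2"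
        using order_trans[OF FKd Fd] tp by (simp add: nKd mult_left_mono)
      finally have "\<eta>/\<beta> * (- dKdd) \<le> \<eta>/\<beta> * (((\<eta>*\<beta>) * (Lf^2*a2) + Lf^2 * \<eta>^2 * G / (\<eta>*\<beta>)) / 2)"
        using e0 b0 by (intro mult_left_mono) auto
      also have "\<dots> = \<eta>^2*(Lf^2*a2/2 + Lf^2*G/(2*\<beta>^2))" using eta0 b0 by (simp add: field_simps power2_eq_square)
      finally show ?thesis by simp
    qed
    have s9: "dQd/(2*\<beta>^2) + \<alpha>/(2*\<beta>^3)*dKd' \<le> \<eta>^2*(1/rho2 ?L + \<alpha>/\<beta>)*Lf^2*G/(2*\<beta>^2)"
    proof -
      have "dQd \<le> norm \<delta> * norm Q\<delta>" unfolding dQd_def by (rule norm_cauchy_schwarz)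
      then have "rho2 ?L * dQd \<le> norm \<delta> * (rho2 ?L * norm Q\<delta>)" using r2pos by (simp add: mult_left_mono mult.left_commute)
      also have "\<dots> \<le> norm \<delta> * norm \<delta>" using FQ by (simp add: mult_left_mono)
      also have "\<dots> \<le> Lf^2 * \<eta>^2 * G" using Fdl by (simp add: ndl[symmetric] power2_eq_square)
      finally have q: "dQd \<le> Lf^2 * \<eta>^2 * G / rho2 ?L" using r2pos by (simp add: pos_le_divide_eq mult.commute)
      have k: "dKd' \<le> Lf^2 * \<eta>^2 * G" using FKdl Fdl by simp
      have "dQd/(2*\<beta>^2) + \<alpha>/(2*\<beta>^3)*dKd' \<le> (Lf^2 * \<eta>^2 * G / rho2 ?L)/(2*\<beta>^2) + \<alpha>/(2*\<beta>^3)*(Lf^2 * \<eta>^2 * G)"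
        using q k b0 ab by (intro add_mono divide_right_mono mult_left_mono) auto
      also have "\<dots> = \<eta>^2*(1/rho2 ?L + \<alpha>/\<beta>)*Lf^2*G/(2*\<beta>^2)" using b0 r2pos by (simp add: field_simps power2_eq_square power3_eq_cube)
      finally show ?thesis .
    qed
    have s10: "\<eta>*xKd' \<le> \<eta>^2*(\<beta>^2*rho ?L*a2/2 + Lf^2*G/(2*\<beta>^2*rho2 ?L))"
    proof -
      have tp: "0 < \<eta> * \<beta>^2 * rho2 ?L" using eta0 b0 r2pos by simp
      have "xKd' \<le> ((\<eta> * \<beta>^2 * rho2 ?L) * a2 + Lf^2 * \<eta>^2 * G / (\<eta> * \<beta>^2 * rho2 ?L)) / 2" by (rule cX[OF tp])
      also have "\<dots> \<le> ((\<eta> * \<beta>^2 * rho ?L) * a2 + Lf^2 * \<eta>^2 * G / (\<eta> * \<beta>^2 * rho2 ?L)) / 2"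
        using r2r a20 e0 by (simp add: mult_right_mono mult_left_mono)
      finally have "\<eta> * xKd' \<le> \<eta> * (((\<eta> * \<beta>^2 * rho ?L) * a2 + Lf^2 * \<eta>^2 * G / (\<eta> * \<beta>^2 * rho2 ?L)) / 2)"
        using e0 by (rule mult_left_mono)
      also have "\<dots> = \<eta>^2*(\<beta>^2*rho ?L*a2/2 + Lf^2*G/(2*\<beta>^2*rho2 ?L))"
        using eta0 b0 r2pos by (simp add: field_simps power2_eq_square)
      finally show ?thesis .
    qed
    have hV4: "dV4 \<le> -\<eta>*(G+G0)/2 + \<eta>*Hd2/2 + Lf/2*\<eta>^2*G"
    proof -
      define h where "h = - \<eta> *\<^sub>R gb"
      have xb'h: "xbar X' = xbar X + h" by (simp add: xb' h_def)
      have sumf: "?N * avgf f y = (\<Sum>i\<in>UNIV. f i y)" for y by (simp add: avgf_def)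
      have dV4e: "dV4 = (\<Sum>i\<in>UNIV. f i (xbar X')) - (\<Sum>i\<in>UNIV. f i (xbar X))"
        by (simp add: dV4_def right_diff_distrib sumf)
      have "(\<Sum>i\<in>UNIV. f i (xbar X')) \<le> (\<Sum>i\<in>UNIV. f i (xbar X) + grad i (xbar X) \<bullet> h + Lf/2 * (norm h)^2)"
        unfolding xb'h by (intro sum_mono descent[OF grad A3])
      also have "\<dots> = (\<Sum>i\<in>UNIV. f i (xbar X)) + (\<Sum>i\<in>UNIV. grad i (xbar X)) \<bullet> h + ?N * (Lf/2 * (norm h)^2)"
        by (simp add: sum.distrib inner_sum_left)
      finally have d1: "dV4 \<le> (\<Sum>i\<in>UNIV. grad i (xbar X)) \<bullet> h + ?N * (Lf/2 * (norm h)^2)" using dV4e by simp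
      have sg: "(\<Sum>i\<in>UNIV. grad i (xbar X)) = ?N *\<^sub>R gb0"
        by (simp add: gb0_def xbar_def g0_def g0col_def)
      have Gg: "G = ?N * (gb \<bullet> gb)" by (simp add: G_def kH_norm gb_def)
      have G0g: "G0 = ?N * (gb0 \<bullet> gb0)" by (simp add: G0_def kH_norm gb0_def)
      have Hdg: "Hd2 = G + G0 - 2 * (?N * (gb \<bullet> gb0))"
      proof -
        have "kmult Hmat d = kmult Hmat g - kmult Hmat g0" by (simp add: d_def kmult_diff)
        then have "Hd2 = G + G0 - 2 * (kmult Hmat g \<bullet> kmult Hmat g0)"
          by (simp add: Hd2_def G_def G0_def inner_diff_left inner_diff_right inner_commute)
        then show ?thesis by (simp add: kH_inner gb_def gb0_def)
      qed
      have "(\<Sum>i\<in>UNIV. grad i (xbar X)) \<bullet> h = - \<eta> * (?N * (gb \<bullet> gb0))"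
        by (simp add: sg h_def inner_commute)
      moreover have "?N * (Lf/2 * (norm h)^2) = Lf/2*\<eta>^2*G"
        using eta0 by (simp add: h_def Gg power_mult_distrib power2_norm_eq_inner[symmetric] power2_eq_square[symmetric])
      moreover have "- \<eta> * (?N * (gb \<bullet> gb0)) = -\<eta>*(G+G0)/2 + \<eta>*Hd2/2"
        by (simp add: Hdg field_simps)
      ultimately show ?thesis using d1 by linarith
    qed
    have fin: "lyapV ?L f grad \<alpha> \<beta> X' V' \<le> lyapV ?L f grad \<alpha> \<beta> X Vv
       - \<eta>*(((\<alpha> - \<beta>) * rho2 ?L - (2 + 3 * Lf^2) / 2) - \<eta>*(\<beta>^2 * rho ?L + (2 * \<alpha>^2 + \<beta>^2) * (rho ?L)^2 + 5 / 2 * Lf^2))*a2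
     - \<eta>*((\<beta> - 1/2 - \<alpha> / (2 * \<beta>^2) - 1 / (2 * \<beta> * rho2 ?L)) - \<eta>*(2 * \<beta>^2 + 1/2))*b2
     - \<eta>*((1/4 - 1 / (2 * \<beta>) * (1/\<beta> + 1 / rho2 ?L + \<alpha>/\<beta>) * Lf^2) - \<eta>*(1 / \<beta>^2 * (1 + 1 / rho2 ?L + \<alpha>/\<beta>) * Lf^2 + Lf * (1 + Lf) / 2))*G
     - \<eta>/4*G0"
      by (rule final_scalar[OF ab b0 eta0 r2pos r2r a20 b20 G_0 G00 eqV hV4 h1 h2 h3 h4 h5 h6 h7
            s1 s2 s3 s4 s5 s6 s7 s8 s9 s10])
    have wX: "wnorm2 Kmat (x k) = a2" by (simp add: wnorm2_def kinner_def wnormK a2_def Kx_def X_def)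
    have wu: "wnorm2 Kmat (v k + (1/\<beta>) *\<^sub>R g0col grad (x k)) = b2"
      by (simp add: wnorm2_def kinner_def wnormK b2_def Ku_def u_def Vv_def g0_def X_def)
    have nG: "(norm (kmult Hmat (gcol grad (x k))))^2 = G" by (simp add: G_def g_def X_def power2_norm_eq_inner)
    have nG0: "(norm (kmult Hmat (g0col grad (x k))))^2 = G0" by (simp add: G0_def g0_def X_def power2_norm_eq_inner)
    show "lyapV (lap W) f grad \<alpha> \<beta> (x (Suc k)) (v (Suc k))
           \<le> lyapV (lap W) f grad \<alpha> \<beta> (x k) (v k)
             - \<eta> * (eps1 (lap W) \<alpha> \<beta> Lf - \<eta> * eps2 (lap W) \<alpha> \<beta> Lf) * wnorm2 Kmat (x k)
             - \<eta> * (eps3 (lap W) \<alpha> \<beta> - \<eta> * eps4 \<beta>)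
                   * wnorm2 Kmat (v k + (1/\<beta>) *\<^sub>R g0col grad (x k))
             - \<eta> * (eps5 (lap W) \<alpha> \<beta> Lf - \<eta> * eps6 (lap W) \<alpha> \<beta> Lf)
                   * (norm (kmult Hmat (gcol grad (x k))))^2
             - \<eta> / 4 * (norm (kmult Hmat (g0col grad (x k))))^2"
      unfolding wX wu nG nG0 eps1_def eps2_def eps3_def eps4_def eps5_def eps6_def
      using fin by (simp add: X_def X'_def Vv_def V'_def)
  qed
qed


end
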